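(* $V$ is a nuclear space.
   Context: Let $N\ge2$, $\mathbf A$ an $N\times N$ zero-one aperiodic matrix, $\Sigma_{\mathbf A}^+=\{\omega\in\{1,\dots,N\}^{\mathbb N\cup\{0\}}:\mathbf A(\omega_m\omega_{m+1})=1\ \forall m\}$. $\mathrm{var}_m(\phi)=\sup\{|\phi(\omega)-\phi(\omega')|:\omega_k=\omega'_k,\ 0\le k\le m-1\}$; $V=\{\phi:\Sigma_{\mathbf A}^+\to\mathbb C:\mathrm{var}_m(\phi)^{1/m}\to0\}$ with the locally convex topology generated by the norms $\|\phi\|_\theta=\|\phi\|_\infty+[\phi]_\theta$, $\theta\in(0,1)$, $[\phi]_\theta$ the Lipschitz constant w.r.t. $d_\theta(\omega,\omega')=\theta^{\min\{m:\omega_m\ne\omega'_m\}}$. A bounded operator $T:E\to F$ between Banach spaces is nuclear if $Tx=\sum_n\lambda_n\langle x,x_n'\rangle y_n$ with $(\lambda_n)$ summable, $(x'_n)\subset E'$ and $(y_n)\subset F$ bounded. A locally convex Hausdorff space $X$ is nuclear if for every continuous seminorm $p$ there is a continuous seminorm $q\ge p$ such that the natural map $\widehat X_q\to\widehat X_p$ is nuclear, where $\widehat X_p$ is the completion of $X/\ker p$ w.r.t. $p$. *)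

theory Defs
  imports Complex_Main "HOL-Library.Extended_Real"
begin

fun matpow :: "nat \<Rightarrow> (nat \<Rightarrow> nat \<Rightarrow> nat) \<Rightarrow> nat \<Rightarrow> nat \<Rightarrow> nat \<Rightarrow> nat" where
  "matpow N A 0 i j = (if i = j then 1 else 0)"
| "matpow N A (Suc n) i j = (\<Sum>k\<in>{1..N}. matpow N A n i k * A k j)"

definition aperiodic01 :: "nat \<Rightarrow> (nat \<Rightarrow> nat \<Rightarrow> nat) \<Rightarrow> bool" where
  "aperiodic01 N A \<longleftrightarrow>
     (\<forall>i\<in>{1..N}. \<forall>j\<in>{1..N}. A i j \<in> {0, 1}) \<and>
     (\<exists>M>0. \<forall>i\<in>{1..N}. \<forall>j\<in>{1..N}. matpow N A M i j > 0)"

definition SigmaA :: "nat \<Rightarrow> (nat \<Rightarrow> nat \<Rightarrow> nat) \<Rightarrow> (nat \<Rightarrow> nat) set" where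
  "SigmaA N A = {\<omega>. (\<forall>m. \<omega> m \<in> {1..N}) \<and> (\<forall>m. A (\<omega> m) (\<omega> (Suc m)) = 1)}"

(* var_m(phi), as an extended real (a priori it may be infinite) *)
definition var :: "nat \<Rightarrow> (nat \<Rightarrow> nat \<Rightarrow> nat) \<Rightarrow> ((nat \<Rightarrow> nat) \<Rightarrow> complex) \<Rightarrow> nat \<Rightarrow> ereal" where
  "var N A \<phi> m = (SUP p \<in> {(\<omega>, \<omega>'). \<omega> \<in> SigmaA N A \<and> \<omega>' \<in> SigmaA N A \<and> (\<forall>k<m. \<omega> k = \<omega>' k)}.
                     ereal (cmod (\<phi> (fst p) - \<phi> (snd p))))"

(* Functions are functions on Sigma_A^+; we represent them as functions on
   all sequences which vanish outside Sigma_A^+.  The condition var_m(phi)^(1/m) \<rightarrow> 0 is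
   written out: for every eps > 0, eventually var_m(phi) \<le> eps^m. *)
definition Vspace :: "nat \<Rightarrow> (nat \<Rightarrow> nat \<Rightarrow> nat) \<Rightarrow> ((nat \<Rightarrow> nat) \<Rightarrow> complex) set" where
  "Vspace N A = {\<phi>. (\<forall>\<omega>. \<omega> \<notin> SigmaA N A \<longrightarrow> \<phi> \<omega> = 0) \<and>
                    (\<forall>\<epsilon>::real>0. \<forall>\<^sub>F m in sequentially. var N A \<phi> m \<le> ereal (\<epsilon> ^ m))}"

definition supnorm :: "nat \<Rightarrow> (nat \<Rightarrow> nat \<Rightarrow> nat) \<Rightarrow> ((nat \<Rightarrow> nat) \<Rightarrow> complex) \<Rightarrow> real" where
  "supnorm N A \<phi> = Sup (insert 0 ((\<lambda>\<omega>. cmod (\<phi> \<omega>)) ` SigmaA N A))"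

(* Lipschitz constant w.r.t. d_theta(w,w') = theta ^ (min {m. w m \<noteq> w' m}) *)
definition lipconst :: "nat \<Rightarrow> (nat \<Rightarrow> nat \<Rightarrow> nat) \<Rightarrow> real \<Rightarrow> ((nat \<Rightarrow> nat) \<Rightarrow> complex) \<Rightarrow> real" where
  "lipconst N A \<theta> \<phi> = Sup (insert 0
     {cmod (\<phi> \<omega> - \<phi> \<omega>') / \<theta> ^ (LEAST m. \<omega> m \<noteq> \<omega>' m) | \<omega> \<omega>'.
        \<omega> \<in> SigmaA N A \<and> \<omega>' \<in> SigmaA N A \<and> \<omega> \<noteq> \<omega>'})"

definition thetanorm :: "nat \<Rightarrow> (nat \<Rightarrow> nat \<Rightarrow> nat) \<Rightarrow> real \<Rightarrow> ((nat \<Rightarrow> nat) \<Rightarrow> complex) \<Rightarrow> real" where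
  "thetanorm N A \<theta> \<phi> = supnorm N A \<phi> + lipconst N A \<theta> \<phi>"

definition seminorm_V :: "nat \<Rightarrow> (nat \<Rightarrow> nat \<Rightarrow> nat) \<Rightarrow> (((nat \<Rightarrow> nat) \<Rightarrow> complex) \<Rightarrow> real) \<Rightarrow> bool" where
  "seminorm_V N A p \<longleftrightarrow>
     (\<forall>\<phi>\<in>Vspace N A. \<forall>\<psi>\<in>Vspace N A. p (\<lambda>\<omega>. \<phi> \<omega> + \<psi> \<omega>) \<le> p \<phi> + p \<psi>) \<and>
     (\<forall>\<phi>\<in>Vspace N A. \<forall>c::complex. p (\<lambda>\<omega>. c * \<phi> \<omega>) = cmod c * p \<phi>)"

(* continuous seminorm for the locally convex topology generated by the norms ||.||_theta:
   dominated by a constant times a finite sum of generating norms *)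
definition cont_seminorm_V :: "nat \<Rightarrow> (nat \<Rightarrow> nat \<Rightarrow> nat) \<Rightarrow> (((nat \<Rightarrow> nat) \<Rightarrow> complex) \<Rightarrow> real) \<Rightarrow> bool" where
  "cont_seminorm_V N A p \<longleftrightarrow> seminorm_V N A p \<and>
     (\<exists>F C. finite F \<and> F \<subseteq> {0<..<1} \<and>
        (\<forall>\<phi>\<in>Vspace N A. p \<phi> \<le> C * (\<Sum>\<theta>\<in>F. thetanorm N A \<theta> \<phi>)))"

(* Completion of (V, p): p-Cauchy sequences in V, with the limit seminorm *)
definition pCauchy :: "nat \<Rightarrow> (nat \<Rightarrow> nat \<Rightarrow> nat) \<Rightarrow> (((nat \<Rightarrow> nat) \<Rightarrow> complex) \<Rightarrow> real)
     \<Rightarrow> (nat \<Rightarrow> (nat \<Rightarrow> nat) \<Rightarrow> complex) \<Rightarrow> bool" where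
  "pCauchy N A p s \<longleftrightarrow> (\<forall>k. s k \<in> Vspace N A) \<and>
     (\<forall>\<epsilon>>0. \<exists>K. \<forall>k\<ge>K. \<forall>l\<ge>K. p (\<lambda>\<omega>. s k \<omega> - s l \<omega>) < \<epsilon>)"

definition cnorm :: "(((nat \<Rightarrow> nat) \<Rightarrow> complex) \<Rightarrow> real) \<Rightarrow> (nat \<Rightarrow> (nat \<Rightarrow> nat) \<Rightarrow> complex) \<Rightarrow> real" where
  "cnorm p s = lim (\<lambda>k. p (s k))"

definition cdist :: "(((nat \<Rightarrow> nat) \<Rightarrow> complex) \<Rightarrow> real) \<Rightarrow> (nat \<Rightarrow> (nat \<Rightarrow> nat) \<Rightarrow> complex)
     \<Rightarrow> (nat \<Rightarrow> (nat \<Rightarrow> nat) \<Rightarrow> complex) \<Rightarrow> real" where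
  "cdist p s t = lim (\<lambda>k. p (\<lambda>\<omega>. s k \<omega> - t k \<omega>))"

(* The natural map from the completion w.r.t. q to the completion w.r.t. p is nuclear:
   iota(x) = sum_n lambda_n <x, x'_n> y_n  with (lambda_n) summable, (x'_n) a bounded
   sequence in the dual of the q-completion, (y_n) a bounded sequence in the p-completion. *)
definition nuclear_natmap :: "nat \<Rightarrow> (nat \<Rightarrow> nat \<Rightarrow> nat) \<Rightarrow> (((nat \<Rightarrow> nat) \<Rightarrow> complex) \<Rightarrow> real)
     \<Rightarrow> (((nat \<Rightarrow> nat) \<Rightarrow> complex) \<Rightarrow> real) \<Rightarrow> bool" where
  "nuclear_natmap N A q p \<longleftrightarrow>
     (\<exists>(lam :: nat \<Rightarrow> complex) (f :: nat \<Rightarrow> (nat \<Rightarrow> (nat \<Rightarrow> nat) \<Rightarrow> complex) \<Rightarrow> complex)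
        (y :: nat \<Rightarrow> nat \<Rightarrow> (nat \<Rightarrow> nat) \<Rightarrow> complex).
        summable (\<lambda>n. cmod (lam n)) \<and>
        (\<forall>n s t. pCauchy N A q s \<longrightarrow> pCauchy N A q t \<longrightarrow>
            f n (\<lambda>k \<omega>. s k \<omega> + t k \<omega>) = f n s + f n t) \<and>
        (\<forall>n s c. pCauchy N A q s \<longrightarrow> f n (\<lambda>k \<omega>. c * s k \<omega>) = c * f n s) \<and>
        (\<exists>C. \<forall>n s. pCauchy N A q s \<longrightarrow> cmod (f n s) \<le> C * cnorm q s) \<and>
        (\<forall>n. pCauchy N A p (y n)) \<and>
        (\<exists>C. \<forall>n. cnorm p (y n) \<le> C) \<and>
        (\<forall>s. pCauchy N A q s \<longrightarrow>
            (\<lambda>M. cdist p s (\<lambda>k \<omega>. \<Sum>n<M. lam n * f n s * y n k \<omega>)) \<longlonglongrightarrow> 0))"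

(* V is a nuclear (locally convex Hausdorff) space *)
definition nuclear_V :: "nat \<Rightarrow> (nat \<Rightarrow> nat \<Rightarrow> nat) \<Rightarrow> bool" where
  "nuclear_V N A \<longleftrightarrow>
     (\<forall>\<phi>\<in>Vspace N A. (\<exists>\<omega>. \<phi> \<omega> \<noteq> 0) \<longrightarrow> (\<exists>\<theta>\<in>{0<..<1}. thetanorm N A \<theta> \<phi> > 0)) \<and>
     (\<forall>p. cont_seminorm_V N A p \<longrightarrow>
        (\<exists>q. cont_seminorm_V N A q \<and> (\<forall>\<phi>\<in>Vspace N A. p \<phi> \<le> q \<phi>) \<and> nuclear_natmap N A q p))"

end

theory Submission
  imports Defs "HOL-Library.Nat_Bijection"
begin


locale sft = fixes N :: nat and A :: "nat \<Rightarrow> nat \<Rightarrow> nat"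
begin

definition agree :: "nat \<Rightarrow> (nat \<Rightarrow> nat) \<Rightarrow> (nat \<Rightarrow> nat) \<Rightarrow> bool" where
  "agree j x y \<longleftrightarrow> (\<forall>k<j. x k = y k)"

definition lipall :: "((nat \<Rightarrow> nat) \<Rightarrow> complex) \<Rightarrow> bool" where
  "lipall \<phi> \<longleftrightarrow> (\<forall>\<theta>\<in>{0<..<1::real}. \<exists>L. \<forall>\<omega>\<in>SigmaA N A. \<forall>\<omega>'\<in>SigmaA N A. \<forall>j.
      agree j \<omega> \<omega>' \<longrightarrow> cmod (\<phi> \<omega> - \<phi> \<omega>') \<le> L * \<theta> ^ j)"

definition incyl :: "nat list \<Rightarrow> (nat \<Rightarrow> nat) \<Rightarrow> bool" where
  "incyl w x \<longleftrightarrow> map x [0..<length w] = w"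

definition pick :: "nat list \<Rightarrow> (nat \<Rightarrow> nat)" where
  "pick w = (SOME x. x \<in> SigmaA N A \<and> incyl w x)"

lemma pick: assumes "x \<in> SigmaA N A" "incyl w x"
  shows "pick w \<in> SigmaA N A" "incyl w (pick w)"
  using someI[of "\<lambda>x. x \<in> SigmaA N A \<and> incyl w x", OF conjI[OF assms]]
  unfolding pick_def by auto

lemma incyl_agree: "incyl w x \<Longrightarrow> incyl w y \<Longrightarrow> agree (length w) x y"
  unfolding incyl_def agree_def by (metis add_0 diff_zero length_map length_upt nth_map_upt)

lemma incyl_self: "incyl (map x [0..<L]) x"
  unfolding incyl_def by simp

lemma agree_incyl: "agree L x y \<Longrightarrow> incyl (map x [0..<L]) y"
  unfolding incyl_def agree_def by simp

lemma agree_mono: "agree j x y \<Longrightarrow> i \<le> j \<Longrightarrow> agree i x y"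
  unfolding agree_def by auto

lemma agree_sym: "agree j x y \<Longrightarrow> agree j y x"
  unfolding agree_def by auto

lemma agree_trans: "agree j x y \<Longrightarrow> agree j y z \<Longrightarrow> agree j x z"
  unfolding agree_def by auto

lemma SigmaA_range: "x \<in> SigmaA N A \<Longrightarrow> x k \<in> {1..N}"
  unfolding SigmaA_def by auto

lemma var_ge:
  assumes "\<omega> \<in> SigmaA N A" "\<omega>' \<in> SigmaA N A" "agree m \<omega> \<omega>'"
  shows "ereal (cmod (\<phi> \<omega> - \<phi> \<omega>')) \<le> var N A \<phi> m"
  unfolding var_def
  by (rule SUP_upper2[where i="(\<omega>,\<omega>')"]) (use assms in \<open>auto simp: agree_def\<close>)

lemma V_lipall:
  assumes "\<phi> \<in> Vspace N A"
  shows "lipall \<phi>"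
  unfolding lipall_def
proof
  fix \<theta> :: real assume th: "\<theta> \<in> {0<..<1}"
  from assms th have "\<forall>\<^sub>F m in sequentially. var N A \<phi> m \<le> ereal (\<theta> ^ m)"
    unfolding Vspace_def by auto
  then obtain m0 where m0: "\<And>m. m \<ge> m0 \<Longrightarrow> var N A \<phi> m \<le> ereal (\<theta> ^ m)"
    unfolding eventually_sequentially by blast
  have close: "cmod (\<phi> \<omega> - \<phi> \<omega>') \<le> \<theta> ^ m" if "\<omega> \<in> SigmaA N A" "\<omega>' \<in> SigmaA N A"
     "agree m \<omega> \<omega>'" "m \<ge> m0" for \<omega> \<omega>' m
  proof -
    have "ereal (cmod (\<phi> \<omega> - \<phi> \<omega>')) \<le> ereal (\<theta> ^ m)"
      using var_ge[OF that(1-3)] m0[OF that(4)] by (rule order_trans)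
    then show ?thesis by simp
  qed
  define W where "W = {w. set w \<subseteq> {1..N} \<and> length w = m0}"
  have finW: "finite W" unfolding W_def by (rule finite_lists_length_eq) simp
  define B where "B = (\<Sum>w\<in>W. cmod (\<phi> (pick w))) + 1"
  have bnd: "cmod (\<phi> \<omega>) \<le> B" if "\<omega> \<in> SigmaA N A" for \<omega>
  proof -
    define w where "w = map \<omega> [0..<m0]"
    have wW: "w \<in> W" unfolding W_def w_def using SigmaA_range[OF that] by auto
    have pk: "pick w \<in> SigmaA N A" "incyl w (pick w)"
      using pick[OF that incyl_self] unfolding w_def by auto
    have ag: "agree m0 \<omega> (pick w)"
      using incyl_agree[OF incyl_self pk(2)[unfolded w_def]] by (simp add: w_def)
    have "cmod (\<phi> \<omega> - \<phi> (pick w)) \<le> \<theta> ^ m0" using close[OF that pk(1) ag] by simp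
    also have "\<dots> \<le> 1" using th by (simp add: power_le_one)
    finally have a: "cmod (\<phi> \<omega>) \<le> cmod (\<phi> (pick w)) + 1"
      by (metis add.commute norm_triangle_sub order_trans add_le_cancel_left)
    have "cmod (\<phi> (pick w)) \<le> (\<Sum>w\<in>W. cmod (\<phi> (pick w)))"
      by (rule member_le_sum[OF wW]) (auto simp: finW)
    then show ?thesis using a unfolding B_def by linarith
  qed
  have B0: "B \<ge> 1" unfolding B_def by (simp add: sum_nonneg)
  define L where "L = max 1 (2 * B / \<theta> ^ m0)"
  show "\<exists>L. \<forall>\<omega>\<in>SigmaA N A. \<forall>\<omega>'\<in>SigmaA N A. \<forall>j. agree j \<omega> \<omega>' \<longrightarrow> cmod (\<phi> \<omega> - \<phi> \<omega>') \<le> L * \<theta> ^ j"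
  proof (intro exI ballI allI impI)
    fix \<omega> \<omega>' j assume o: "\<omega> \<in> SigmaA N A" "\<omega>' \<in> SigmaA N A" and ag: "agree j \<omega> \<omega>'"
    show "cmod (\<phi> \<omega> - \<phi> \<omega>') \<le> L * \<theta> ^ j"
    proof (cases "j \<ge> m0")
      case True
      have "cmod (\<phi> \<omega> - \<phi> \<omega>') \<le> \<theta> ^ j" by (rule close[OF o ag True])
      also have "\<dots> = 1 * \<theta> ^ j" by simp
      also have "\<dots> \<le> L * \<theta> ^ j" unfolding L_def using th
        by (intro mult_right_mono) auto
      finally show ?thesis .
    next
      case False
      have "cmod (\<phi> \<omega> - \<phi> \<omega>') \<le> cmod (\<phi> \<omega>) + cmod (\<phi> \<omega>')" by (rule norm_triangle_ineq4)
      also have "\<dots> \<le> 2 * B" using bnd[OF o(1)] bnd[OF o(2)] by simp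
      also have "\<dots> = (2 * B / \<theta> ^ m0) * \<theta> ^ m0" using th by simp
      also have "\<dots> \<le> (2 * B / \<theta> ^ m0) * \<theta> ^ j"
        using th False B0 by (intro mult_left_mono power_decreasing) auto
      also have "\<dots> \<le> L * \<theta> ^ j" unfolding L_def using th by (intro mult_right_mono) auto
      finally show ?thesis .
    qed
  qed
qed

lemma lipall_V:
  assumes van: "\<And>\<omega>. \<omega> \<notin> SigmaA N A \<Longrightarrow> \<phi> \<omega> = 0" and lip: "lipall \<phi>"
  shows "\<phi> \<in> Vspace N A"
  unfolding Vspace_def
proof (intro CollectI conjI allI impI)
  fix \<omega> assume "\<omega> \<notin> SigmaA N A" then show "\<phi> \<omega> = 0" by (rule van)
next
  fix \<epsilon> :: real assume e: "\<epsilon> > 0"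
  define e where "e = min \<epsilon> (1/2)"
  have e0: "0 < e" "e \<le> 1/2" "e \<le> \<epsilon>" using e unfolding e_def by auto
  define \<theta> where "\<theta> = e / 2"
  have th: "\<theta> \<in> {0<..<1}" using e0 unfolding \<theta>_def by auto
  then obtain L where L: "\<And>\<omega> \<omega>' j. \<omega>\<in>SigmaA N A \<Longrightarrow> \<omega>'\<in>SigmaA N A \<Longrightarrow> agree j \<omega> \<omega>' \<Longrightarrow>
     cmod (\<phi> \<omega> - \<phi> \<omega>') \<le> L * \<theta> ^ j"
    using lip unfolding lipall_def by blast
  obtain m0 where m0: "L \<le> 2 ^ m0"
    using real_arch_pow[of 2 L] by (auto intro: less_imp_le)
  show "\<forall>\<^sub>F m in sequentially. var N A \<phi> m \<le> ereal (\<epsilon> ^ m)"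
    unfolding eventually_sequentially
  proof (intro exI allI impI)
    fix m assume m: "m \<ge> m0"
    have "L \<le> 2 ^ m" using m0 power_increasing[OF m, of "2::real"] by linarith
    then have "L * \<theta> ^ m \<le> 2 ^ m * \<theta> ^ m" using th by (intro mult_right_mono) auto
    also have "\<dots> = e ^ m" unfolding \<theta>_def by (simp add: power_divide)
    also have "\<dots> \<le> \<epsilon> ^ m" using e0 by (intro power_mono) auto
    finally have le: "L * \<theta> ^ m \<le> \<epsilon> ^ m" .
    show "var N A \<phi> m \<le> ereal (\<epsilon> ^ m)"
      unfolding var_def
    proof (rule SUP_least)
      fix pr assume "pr \<in> {(\<omega>, \<omega>'). \<omega> \<in> SigmaA N A \<and> \<omega>' \<in> SigmaA N A \<and> (\<forall>k<m. \<omega> k = \<omega>' k)}"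
      then obtain \<omega> \<omega>' where pr: "pr = (\<omega>, \<omega>')" "\<omega> \<in> SigmaA N A" "\<omega>' \<in> SigmaA N A" "agree m \<omega> \<omega>'"
        unfolding agree_def by auto
      show "ereal (cmod (\<phi> (fst pr) - \<phi> (snd pr))) \<le> ereal (\<epsilon> ^ m)"
        using L[OF pr(2-4)] le pr(1) by simp
    qed
  qed
qed

lemma V_iff: "\<phi> \<in> Vspace N A \<longleftrightarrow> (\<forall>\<omega>. \<omega> \<notin> SigmaA N A \<longrightarrow> \<phi> \<omega> = 0) \<and> lipall \<phi>"
  using V_lipall lipall_V unfolding Vspace_def by blast

lemma lipallI:
  assumes "\<And>\<theta>. \<theta> \<in> {0<..<1::real} \<Longrightarrow> \<exists>L. \<forall>\<omega>\<in>SigmaA N A. \<forall>\<omega>'\<in>SigmaA N A. \<forall>j.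
      agree j \<omega> \<omega>' \<longrightarrow> cmod (\<phi> \<omega> - \<phi> \<omega>') \<le> L * \<theta> ^ j"
  shows "lipall \<phi>" using assms unfolding lipall_def by blast

lemma lipallE:
  assumes "lipall \<phi>" "\<theta> \<in> {0<..<1::real}"
  obtains L where "\<And>\<omega> \<omega>' j. \<omega>\<in>SigmaA N A \<Longrightarrow> \<omega>'\<in>SigmaA N A \<Longrightarrow>
      agree j \<omega> \<omega>' \<Longrightarrow> cmod (\<phi> \<omega> - \<phi> \<omega>') \<le> L * \<theta> ^ j"
  using assms unfolding lipall_def by blast

lemma lipall_add: assumes "lipall \<phi>" "lipall \<psi>" shows "lipall (\<lambda>\<omega>. \<phi> \<omega> + \<psi> \<omega>)"
proof (rule lipallI)
  fix \<theta> :: real assume th: "\<theta> \<in> {0<..<1}"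
  obtain L1 where L1: "\<And>\<omega> \<omega>' j. \<omega>\<in>SigmaA N A \<Longrightarrow> \<omega>'\<in>SigmaA N A \<Longrightarrow>
      agree j \<omega> \<omega>' \<Longrightarrow> cmod (\<phi> \<omega> - \<phi> \<omega>') \<le> L1 * \<theta> ^ j" using lipallE[OF assms(1) th] by blast
  obtain L2 where L2: "\<And>\<omega> \<omega>' j. \<omega>\<in>SigmaA N A \<Longrightarrow> \<omega>'\<in>SigmaA N A \<Longrightarrow>
      agree j \<omega> \<omega>' \<Longrightarrow> cmod (\<psi> \<omega> - \<psi> \<omega>') \<le> L2 * \<theta> ^ j" using lipallE[OF assms(2) th] by blast
  show "\<exists>L. \<forall>\<omega>\<in>SigmaA N A. \<forall>\<omega>'\<in>SigmaA N A. \<forall>j. agree j \<omega> \<omega>' \<longrightarrow>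
     cmod (\<phi> \<omega> + \<psi> \<omega> - (\<phi> \<omega>' + \<psi> \<omega>')) \<le> L * \<theta> ^ j"
  proof (intro exI[of _ "L1 + L2"] ballI allI impI)
    fix \<omega> \<omega>' j assume o: "\<omega>\<in>SigmaA N A" "\<omega>'\<in>SigmaA N A" "agree j \<omega> \<omega>'"
    have "cmod (\<phi> \<omega> + \<psi> \<omega> - (\<phi> \<omega>' + \<psi> \<omega>')) \<le> cmod (\<phi> \<omega> - \<phi> \<omega>') + cmod (\<psi> \<omega> - \<psi> \<omega>')"
      by (metis add_diff_add norm_triangle_ineq)
    also have "\<dots> \<le> L1 * \<theta> ^ j + L2 * \<theta> ^ j" using L1[OF o] L2[OF o] by simp
    finally show "cmod (\<phi> \<omega> + \<psi> \<omega> - (\<phi> \<omega>' + \<psi> \<omega>')) \<le> (L1 + L2) * \<theta> ^ j"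
      by (simp add: distrib_right)
  qed
qed

lemma lipall_scale: assumes "lipall \<phi>" shows "lipall (\<lambda>\<omega>. c * \<phi> \<omega>)"
proof (rule lipallI)
  fix \<theta> :: real assume th: "\<theta> \<in> {0<..<1}"
  obtain L1 where L1: "\<And>\<omega> \<omega>' j. \<omega>\<in>SigmaA N A \<Longrightarrow> \<omega>'\<in>SigmaA N A \<Longrightarrow>
      agree j \<omega> \<omega>' \<Longrightarrow> cmod (\<phi> \<omega> - \<phi> \<omega>') \<le> L1 * \<theta> ^ j" using lipallE[OF assms(1) th] by blast
  show "\<exists>L. \<forall>\<omega>\<in>SigmaA N A. \<forall>\<omega>'\<in>SigmaA N A. \<forall>j. agree j \<omega> \<omega>' \<longrightarrow>
     cmod (c * \<phi> \<omega> - c * \<phi> \<omega>') \<le> L * \<theta> ^ j"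
  proof (intro exI[of _ "cmod c * L1"] ballI allI impI)
    fix \<omega> \<omega>' j assume o: "\<omega>\<in>SigmaA N A" "\<omega>'\<in>SigmaA N A" "agree j \<omega> \<omega>'"
    have "cmod (c * \<phi> \<omega> - c * \<phi> \<omega>') = cmod c * cmod (\<phi> \<omega> - \<phi> \<omega>')"
      by (metis norm_mult right_diff_distrib)
    also have "\<dots> \<le> cmod c * (L1 * \<theta> ^ j)" using L1[OF o] by (simp add: mult_left_mono)
    finally show "cmod (c * \<phi> \<omega> - c * \<phi> \<omega>') \<le> cmod c * L1 * \<theta> ^ j" by (simp add: mult.assoc)
  qed
qed

lemma lipall_zero: "lipall (\<lambda>\<omega>. 0)"
  by (rule lipallI) (auto intro!: exI[of _ 0])

lemma lipall_diff: assumes "lipall \<phi>" "lipall \<psi>" shows "lipall (\<lambda>\<omega>. \<phi> \<omega> - \<psi> \<omega>)"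
  using lipall_add[OF assms(1) lipall_scale[OF assms(2), of "-1"]] by simp

lemma lipall_sum: assumes "finite I" "\<And>i. i \<in> I \<Longrightarrow> lipall (g i)"
  shows "lipall (\<lambda>\<omega>. \<Sum>i\<in>I. g i \<omega>)"
  using assms by (induction I rule: finite_induct) (auto intro: lipall_zero lipall_add)

lemma V_add: "\<phi> \<in> Vspace N A \<Longrightarrow> \<psi> \<in> Vspace N A \<Longrightarrow> (\<lambda>\<omega>. \<phi> \<omega> + \<psi> \<omega>) \<in> Vspace N A"
  unfolding V_iff using lipall_add by auto
lemma V_scale: "\<phi> \<in> Vspace N A \<Longrightarrow> (\<lambda>\<omega>. c * \<phi> \<omega>) \<in> Vspace N A"
  unfolding V_iff using lipall_scale by auto
lemma V_diff: "\<phi> \<in> Vspace N A \<Longrightarrow> \<psi> \<in> Vspace N A \<Longrightarrow> (\<lambda>\<omega>. \<phi> \<omega> - \<psi> \<omega>) \<in> Vspace N A"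
  unfolding V_iff using lipall_diff by auto
lemma V_zero: "(\<lambda>\<omega>. 0) \<in> Vspace N A"
  unfolding V_iff using lipall_zero by auto
lemma V_sum: "finite I \<Longrightarrow> (\<And>i. i \<in> I \<Longrightarrow> g i \<in> Vspace N A) \<Longrightarrow> (\<lambda>\<omega>. \<Sum>i\<in>I. g i \<omega>) \<in> Vspace N A"
  unfolding V_iff by (auto intro!: lipall_sum)

lemma lipall_bdd: assumes "lipall \<phi>" shows "\<exists>B. \<forall>\<omega>\<in>SigmaA N A. cmod (\<phi> \<omega>) \<le> B"
proof (cases "SigmaA N A = {}")
  case True then show ?thesis by auto
next
  case False
  then obtain \<omega>0 where o0: "\<omega>0 \<in> SigmaA N A" by auto
  obtain L where L: "\<And>\<omega> \<omega>' j. \<omega>\<in>SigmaA N A \<Longrightarrow> \<omega>'\<in>SigmaA N A \<Longrightarrow>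
      agree j \<omega> \<omega>' \<Longrightarrow> cmod (\<phi> \<omega> - \<phi> \<omega>') \<le> L * (1/2) ^ j" using lipallE[OF assms, of "1/2"] by auto
  show ?thesis
  proof (intro exI ballI)
    fix \<omega> assume "\<omega> \<in> SigmaA N A"
    from L[OF this o0, of 0] have "cmod (\<phi> \<omega> - \<phi> \<omega>0) \<le> L" by (simp add: agree_def)
    then show "cmod (\<phi> \<omega>) \<le> cmod (\<phi> \<omega>0) + L" by (metis norm_triangle_sub add.commute add_mono order_trans order_refl)
  qed
qed

lemma sup_ge: assumes "lipall \<phi>" "\<omega> \<in> SigmaA N A" shows "cmod (\<phi> \<omega>) \<le> supnorm N A \<phi>"
proof -
  obtain B where B: "\<forall>\<omega>\<in>SigmaA N A. cmod (\<phi> \<omega>) \<le> B" using lipall_bdd[OF assms(1)] by blast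
  show ?thesis unfolding supnorm_def
    by (rule cSup_upper) (use assms(2) B in \<open>auto intro!: bdd_aboveI[of _ "max 0 B"]\<close>)
qed

lemma sup_nonneg: assumes "lipall \<phi>" shows "0 \<le> supnorm N A \<phi>"
proof -
  obtain B where B: "\<forall>\<omega>\<in>SigmaA N A. cmod (\<phi> \<omega>) \<le> B" using lipall_bdd[OF assms(1)] by blast
  show ?thesis unfolding supnorm_def
    by (rule cSup_upper) (use B in \<open>auto intro!: bdd_aboveI[of _ "max 0 B"]\<close>)
qed

lemma sup_le: assumes "0 \<le> B" "\<And>\<omega>. \<omega> \<in> SigmaA N A \<Longrightarrow> cmod (\<phi> \<omega>) \<le> B"
  shows "supnorm N A \<phi> \<le> B"
  unfolding supnorm_def by (rule cSup_least) (use assms in auto)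

lemma least_agree: assumes "\<omega> \<noteq> \<omega>'" shows "agree (LEAST m. \<omega> m \<noteq> \<omega>' m) \<omega> \<omega>'"
  unfolding agree_def using not_less_Least by blast

lemma agree_least: assumes "agree j \<omega> \<omega>'" "\<omega> \<noteq> \<omega>'" shows "j \<le> (LEAST m. \<omega> m \<noteq> \<omega>' m)"
proof -
  from assms(2) obtain m where "\<omega> m \<noteq> \<omega>' m" by auto
  then have "\<omega> (LEAST m. \<omega> m \<noteq> \<omega>' m) \<noteq> \<omega>' (LEAST m. \<omega> m \<noteq> \<omega>' m)" by (rule LeastI)
  then show ?thesis using assms(1) unfolding agree_def by (meson not_le)
qed

lemma lip_bdd:
  assumes "lipall \<phi>" "\<theta> \<in> {0<..<1::real}"
  shows "bdd_above (insert 0 {cmod (\<phi> \<omega> - \<phi> \<omega>') / \<theta> ^ (LEAST m. \<omega> m \<noteq> \<omega>' m) | \<omega> \<omega>'.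
        \<omega> \<in> SigmaA N A \<and> \<omega>' \<in> SigmaA N A \<and> \<omega> \<noteq> \<omega>'})"
proof -
  obtain L where L: "\<And>\<omega> \<omega>' j. \<omega>\<in>SigmaA N A \<Longrightarrow> \<omega>'\<in>SigmaA N A \<Longrightarrow>
      agree j \<omega> \<omega>' \<Longrightarrow> cmod (\<phi> \<omega> - \<phi> \<omega>') \<le> L * \<theta> ^ j" using lipallE[OF assms] by blast
  show ?thesis
  proof (rule bdd_aboveI[of _ "max 0 L"])
    fix x assume "x \<in> insert 0 {cmod (\<phi> \<omega> - \<phi> \<omega>') / \<theta> ^ (LEAST m. \<omega> m \<noteq> \<omega>' m) | \<omega> \<omega>'.
        \<omega> \<in> SigmaA N A \<and> \<omega>' \<in> SigmaA N A \<and> \<omega> \<noteq> \<omega>'}"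
    then consider "x = 0" | \<omega> \<omega>' where "x = cmod (\<phi> \<omega> - \<phi> \<omega>') / \<theta> ^ (LEAST m. \<omega> m \<noteq> \<omega>' m)"
       "\<omega> \<in> SigmaA N A" "\<omega>' \<in> SigmaA N A" "\<omega> \<noteq> \<omega>'" by blast
    then show "x \<le> max 0 L"
    proof cases
      case 1 then show ?thesis by simp
    next
      case 2
      have "cmod (\<phi> \<omega> - \<phi> \<omega>') \<le> L * \<theta> ^ (LEAST m. \<omega> m \<noteq> \<omega>' m)"
        using L[OF 2(2,3) least_agree[OF 2(4)]] .
      then have "x \<le> L" unfolding 2(1) using assms(2) by (simp add: divide_le_eq)
      then show ?thesis by simp
    qed
  qed
qed

lemma lip_nonneg: assumes "lipall \<phi>" "\<theta> \<in> {0<..<1::real}" shows "0 \<le> lipconst N A \<theta> \<phi>"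
  unfolding lipconst_def by (rule cSup_upper[OF _ lip_bdd[OF assms]]) simp

lemma lip_ge: assumes "lipall \<phi>" "\<theta> \<in> {0<..<1::real}" "\<omega>\<in>SigmaA N A" "\<omega>'\<in>SigmaA N A" "agree j \<omega> \<omega>'"
  shows "cmod (\<phi> \<omega> - \<phi> \<omega>') \<le> lipconst N A \<theta> \<phi> * \<theta> ^ j"
proof (cases "\<omega> = \<omega>'")
  case True then show ?thesis using lip_nonneg[OF assms(1,2)] assms(2) by simp
next
  case False
  define l where "l = (LEAST m. \<omega> m \<noteq> \<omega>' m)"
  have "cmod (\<phi> \<omega> - \<phi> \<omega>') / \<theta> ^ l \<le> lipconst N A \<theta> \<phi>"
    unfolding lipconst_def l_def by (rule cSup_upper[OF _ lip_bdd[OF assms(1,2)]]) (use assms False in blast)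
  then have "cmod (\<phi> \<omega> - \<phi> \<omega>') \<le> lipconst N A \<theta> \<phi> * \<theta> ^ l" using assms(2) by (simp add: divide_le_eq)
  also have "\<dots> \<le> lipconst N A \<theta> \<phi> * \<theta> ^ j"
    using assms(2) agree_least[OF assms(5) False] lip_nonneg[OF assms(1,2)]
    by (intro mult_left_mono power_decreasing) (auto simp: l_def)
  finally show ?thesis .
qed

lemma lip_le: assumes "0 \<le> L" "\<theta> \<in> {0<..<1::real}"
  "\<And>\<omega> \<omega>' j. \<omega>\<in>SigmaA N A \<Longrightarrow> \<omega>'\<in>SigmaA N A \<Longrightarrow> agree j \<omega> \<omega>' \<Longrightarrow> cmod (\<phi> \<omega> - \<phi> \<omega>') \<le> L * \<theta> ^ j"
  shows "lipconst N A \<theta> \<phi> \<le> L"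
  unfolding lipconst_def
proof (rule cSup_least)
  fix x assume "x \<in> insert 0 {cmod (\<phi> \<omega> - \<phi> \<omega>') / \<theta> ^ (LEAST m. \<omega> m \<noteq> \<omega>' m) | \<omega> \<omega>'.
        \<omega> \<in> SigmaA N A \<and> \<omega>' \<in> SigmaA N A \<and> \<omega> \<noteq> \<omega>'}"
  then consider "x = 0" | \<omega> \<omega>' where "x = cmod (\<phi> \<omega> - \<phi> \<omega>') / \<theta> ^ (LEAST m. \<omega> m \<noteq> \<omega>' m)"
     "\<omega> \<in> SigmaA N A" "\<omega>' \<in> SigmaA N A" "\<omega> \<noteq> \<omega>'" by blast
  then show "x \<le> L"
  proof cases
    case 1 then show ?thesis using assms by simp
  next
    case 2
    have "cmod (\<phi> \<omega> - \<phi> \<omega>') \<le> L * \<theta> ^ (LEAST m. \<omega> m \<noteq> \<omega>' m)"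
      using assms(3)[OF 2(2,3) least_agree[OF 2(4)]] .
    then show ?thesis unfolding 2(1) using assms(2) by (simp add: divide_le_eq)
  qed
qed simp

lemma tn_nonneg: "lipall \<phi> \<Longrightarrow> \<theta> \<in> {0<..<1::real} \<Longrightarrow> 0 \<le> thetanorm N A \<theta> \<phi>"
  unfolding thetanorm_def using sup_nonneg lip_nonneg by (simp add: add_nonneg_nonneg)

lemma tn_add: assumes "lipall \<phi>" "lipall \<psi>" "\<theta> \<in> {0<..<1::real}"
  shows "thetanorm N A \<theta> (\<lambda>\<omega>. \<phi> \<omega> + \<psi> \<omega>) \<le> thetanorm N A \<theta> \<phi> + thetanorm N A \<theta> \<psi>"
proof -
  have "supnorm N A (\<lambda>\<omega>. \<phi> \<omega> + \<psi> \<omega>) \<le> supnorm N A \<phi> + supnorm N A \<psi>"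
    by (rule sup_le) (use assms sup_nonneg sup_ge in \<open>auto intro!: norm_triangle_le add_mono\<close>)
  moreover have "lipconst N A \<theta> (\<lambda>\<omega>. \<phi> \<omega> + \<psi> \<omega>) \<le> lipconst N A \<theta> \<phi> + lipconst N A \<theta> \<psi>"
  proof (rule lip_le)
    fix \<omega> \<omega>' j assume o: "\<omega>\<in>SigmaA N A" "\<omega>'\<in>SigmaA N A" "agree j \<omega> \<omega>'"
    have "cmod (\<phi> \<omega> + \<psi> \<omega> - (\<phi> \<omega>' + \<psi> \<omega>')) \<le> cmod (\<phi> \<omega> - \<phi> \<omega>') + cmod (\<psi> \<omega> - \<psi> \<omega>')"
      by (metis add_diff_add norm_triangle_ineq)
    also have "\<dots> \<le> lipconst N A \<theta> \<phi> * \<theta> ^ j + lipconst N A \<theta> \<psi> * \<theta> ^ j"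
      using lip_ge[OF assms(1,3) o] lip_ge[OF assms(2,3) o] by simp
    finally show "cmod (\<phi> \<omega> + \<psi> \<omega> - (\<phi> \<omega>' + \<psi> \<omega>')) \<le> (lipconst N A \<theta> \<phi> + lipconst N A \<theta> \<psi>) * \<theta> ^ j"
      by (simp add: distrib_right)
  qed (use assms lip_nonneg in auto)
  ultimately show ?thesis unfolding thetanorm_def by simp
qed

lemma tn_scale_le: assumes "lipall \<phi>" "\<theta> \<in> {0<..<1::real}"
  shows "thetanorm N A \<theta> (\<lambda>\<omega>. c * \<phi> \<omega>) \<le> cmod c * thetanorm N A \<theta> \<phi>"
proof -
  have "supnorm N A (\<lambda>\<omega>. c * \<phi> \<omega>) \<le> cmod c * supnorm N A \<phi>"
    by (rule sup_le) (use assms sup_nonneg sup_ge in \<open>auto simp: norm_mult intro!: mult_left_mono\<close>)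
  moreover have "lipconst N A \<theta> (\<lambda>\<omega>. c * \<phi> \<omega>) \<le> cmod c * lipconst N A \<theta> \<phi>"
  proof (rule lip_le)
    fix \<omega> \<omega>' j assume o: "\<omega>\<in>SigmaA N A" "\<omega>'\<in>SigmaA N A" "agree j \<omega> \<omega>'"
    have "cmod (c * \<phi> \<omega> - c * \<phi> \<omega>') = cmod c * cmod (\<phi> \<omega> - \<phi> \<omega>')"
      by (metis norm_mult right_diff_distrib)
    also have "\<dots> \<le> cmod c * (lipconst N A \<theta> \<phi> * \<theta> ^ j)"
      using lip_ge[OF assms o] by (simp add: mult_left_mono)
    finally show "cmod (c * \<phi> \<omega> - c * \<phi> \<omega>') \<le> cmod c * lipconst N A \<theta> \<phi> * \<theta> ^ j"
      by (simp add: mult.assoc)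
  qed (use assms lip_nonneg in auto)
  ultimately show ?thesis unfolding thetanorm_def by (simp add: distrib_left)
qed

lemma tn_scale: assumes "lipall \<phi>" "\<theta> \<in> {0<..<1::real}"
  shows "thetanorm N A \<theta> (\<lambda>\<omega>. c * \<phi> \<omega>) = cmod c * thetanorm N A \<theta> \<phi>"
proof (cases "c = 0")
  case True
  have "thetanorm N A \<theta> (\<lambda>\<omega>. c * \<phi> \<omega>) \<le> 0" using tn_scale_le[OF assms, of c] True by simp
  moreover have "0 \<le> thetanorm N A \<theta> (\<lambda>\<omega>. c * \<phi> \<omega>)" by (rule tn_nonneg[OF lipall_scale[OF assms(1)] assms(2)])
  ultimately show ?thesis using True by simp
next
  case False
  have "thetanorm N A \<theta> (\<lambda>\<omega>. inverse c * (c * \<phi> \<omega>)) \<le> cmod (inverse c) * thetanorm N A \<theta> (\<lambda>\<omega>. c * \<phi> \<omega>)"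
    by (rule tn_scale_le[OF lipall_scale[OF assms(1)] assms(2)])
  moreover have "(\<lambda>\<omega>. inverse c * (c * \<phi> \<omega>)) = \<phi>" using False by auto
  ultimately have "thetanorm N A \<theta> \<phi> \<le> thetanorm N A \<theta> (\<lambda>\<omega>. c * \<phi> \<omega>) / cmod c"
    by (simp add: norm_inverse divide_inverse mult.commute)
  then have "cmod c * thetanorm N A \<theta> \<phi> \<le> thetanorm N A \<theta> (\<lambda>\<omega>. c * \<phi> \<omega>)"
    using False by (simp add: field_simps)
  then show ?thesis using tn_scale_le[OF assms, of c] by simp
qed

lemma tn_mono: assumes "lipall \<phi>" "\<theta>1 \<in> {0<..<1::real}" "\<theta>0 \<in> {0<..<1::real}" "\<theta>1 \<le> \<theta>0"
  shows "thetanorm N A \<theta>0 \<phi> \<le> thetanorm N A \<theta>1 \<phi>"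
proof -
  have "lipconst N A \<theta>0 \<phi> \<le> lipconst N A \<theta>1 \<phi>"
  proof (rule lip_le)
    fix \<omega> \<omega>' j assume o: "\<omega>\<in>SigmaA N A" "\<omega>'\<in>SigmaA N A" "agree j \<omega> \<omega>'"
    have "cmod (\<phi> \<omega> - \<phi> \<omega>') \<le> lipconst N A \<theta>1 \<phi> * \<theta>1 ^ j" by (rule lip_ge[OF assms(1,2) o])
    also have "\<dots> \<le> lipconst N A \<theta>1 \<phi> * \<theta>0 ^ j"
      using assms lip_nonneg[OF assms(1,2)] by (intro mult_left_mono power_mono) auto
    finally show "cmod (\<phi> \<omega> - \<phi> \<omega>') \<le> lipconst N A \<theta>1 \<phi> * \<theta>0 ^ j" .
  qed (use assms lip_nonneg in auto)
  then show ?thesis unfolding thetanorm_def by simp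
qed

section \<open>Seminorms\<close>

context fixes p :: "((nat \<Rightarrow> nat) \<Rightarrow> complex) \<Rightarrow> real" assumes sn: "seminorm_V N A p"
begin

lemma sn_add: "\<phi> \<in> Vspace N A \<Longrightarrow> \<psi> \<in> Vspace N A \<Longrightarrow> p (\<lambda>\<omega>. \<phi> \<omega> + \<psi> \<omega>) \<le> p \<phi> + p \<psi>"
  using sn unfolding seminorm_V_def by blast

lemma sn_scale: "\<phi> \<in> Vspace N A \<Longrightarrow> p (\<lambda>\<omega>. c * \<phi> \<omega>) = cmod c * p \<phi>"
  using sn unfolding seminorm_V_def by blast

lemma sn_zero: "p (\<lambda>\<omega>. 0) = 0"
  using sn_scale[OF V_zero, of 0] by simp

lemma sn_neg: "\<phi> \<in> Vspace N A \<Longrightarrow> p (\<lambda>\<omega>. - \<phi> \<omega>) = p \<phi>"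
  using sn_scale[of \<phi> "-1"] by simp

lemma sn_nonneg: assumes "\<phi> \<in> Vspace N A" shows "0 \<le> p \<phi>"
proof -
  have "p (\<lambda>\<omega>. \<phi> \<omega> + (- \<phi> \<omega>)) \<le> p \<phi> + p (\<lambda>\<omega>. - \<phi> \<omega>)"
    using sn_add[OF assms V_scale[OF assms, of "-1"]] by simp
  then show ?thesis using sn_zero sn_neg[OF assms] by simp
qed

lemma sn_swap: "\<phi> \<in> Vspace N A \<Longrightarrow> \<psi> \<in> Vspace N A \<Longrightarrow> p (\<lambda>\<omega>. \<phi> \<omega> - \<psi> \<omega>) = p (\<lambda>\<omega>. \<psi> \<omega> - \<phi> \<omega>)"
  using sn_neg[OF V_diff, of \<phi> \<psi>] by simp

lemma sn_tri: assumes "\<phi> \<in> Vspace N A" "\<psi> \<in> Vspace N A" "\<chi> \<in> Vspace N A"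
  shows "p (\<lambda>\<omega>. \<phi> \<omega> - \<chi> \<omega>) \<le> p (\<lambda>\<omega>. \<phi> \<omega> - \<psi> \<omega>) + p (\<lambda>\<omega>. \<psi> \<omega> - \<chi> \<omega>)"
  using sn_add[OF V_diff[OF assms(1,2)] V_diff[OF assms(2,3)]] by simp

lemma sn_tri2: assumes "\<phi> \<in> Vspace N A" "\<psi> \<in> Vspace N A"
  shows "p \<phi> \<le> p (\<lambda>\<omega>. \<phi> \<omega> - \<psi> \<omega>) + p \<psi>"
  using sn_add[OF V_diff[OF assms(1,2)] assms(2)] by simp

lemma sn_rev: assumes "\<phi> \<in> Vspace N A" "\<psi> \<in> Vspace N A"
  shows "\<bar>p \<phi> - p \<psi>\<bar> \<le> p (\<lambda>\<omega>. \<phi> \<omega> - \<psi> \<omega>)"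
  using sn_tri2[OF assms] sn_tri2[OF assms(2,1)] sn_swap[OF assms] by linarith

lemma sn_sum: "finite I \<Longrightarrow> (\<And>i. i \<in> I \<Longrightarrow> g i \<in> Vspace N A) \<Longrightarrow>
    p (\<lambda>\<omega>. \<Sum>i\<in>I. g i \<omega>) \<le> (\<Sum>i\<in>I. p (g i))"
proof (induction I rule: finite_induct)
  case empty then show ?case using sn_zero by simp
next
  case (insert i I)
  have "p (\<lambda>\<omega>. \<Sum>i\<in>insert i I. g i \<omega>) = p (\<lambda>\<omega>. g i \<omega> + (\<Sum>i\<in>I. g i \<omega>))"
    using insert by simp
  also have "\<dots> \<le> p (g i) + p (\<lambda>\<omega>. \<Sum>i\<in>I. g i \<omega>)"
    using sn_add[of "g i" "\<lambda>\<omega>. \<Sum>i\<in>I. g i \<omega>"] insert V_sum by auto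
  also have "\<dots> \<le> p (g i) + (\<Sum>i\<in>I. p (g i))" using insert by simp
  finally show ?case using insert by simp
qed

lemma sn_conv: assumes "\<And>k. s k \<in> Vspace N A"
  "\<And>\<epsilon>. \<epsilon> > 0 \<Longrightarrow> \<exists>K. \<forall>k\<ge>K. \<forall>l\<ge>K. p (\<lambda>\<omega>. s k \<omega> - s l \<omega>) < \<epsilon>"
  shows "convergent (\<lambda>k. p (s k))"
proof -
  have "Cauchy (\<lambda>k. p (s k))"
  proof (rule metric_CauchyI)
    fix e :: real assume "0 < e"
    then obtain K where K: "\<forall>k\<ge>K. \<forall>l\<ge>K. p (\<lambda>\<omega>. s k \<omega> - s l \<omega>) < e" using assms(2) by blast
    show "\<exists>M. \<forall>m\<ge>M. \<forall>n\<ge>M. dist (p (s m)) (p (s n)) < e"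
      using K sn_rev[OF assms(1) assms(1)] unfolding dist_real_def by (meson order_le_less_trans)
  qed
  then show ?thesis by (simp add: Cauchy_convergent_iff)
qed

end

section \<open>Cylinder indicators\<close>

definition ind :: "nat list \<Rightarrow> (nat \<Rightarrow> nat) \<Rightarrow> complex" where
  "ind w \<omega> = (if \<omega> \<in> SigmaA N A \<and> incyl w \<omega> then 1 else 0)"

lemma agree_map: "agree L x y \<Longrightarrow> map x [0..<L] = map y [0..<L]"
  unfolding agree_def by simp

lemma ind_agree: assumes "\<theta> \<in> {0<..<1::real}" "\<omega>\<in>SigmaA N A" "\<omega>'\<in>SigmaA N A" "agree j \<omega> \<omega>'"
  shows "cmod (ind w \<omega> - ind w \<omega>') \<le> (1 / \<theta> ^ length w) * \<theta> ^ j"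
proof (cases "length w \<le> j")
  case True
  then have "agree (length w) \<omega> \<omega>'" using assms(4) agree_mono by blast
  then have "incyl w \<omega> \<longleftrightarrow> incyl w \<omega>'" unfolding incyl_def using agree_map by metis
  then show ?thesis unfolding ind_def using assms by simp
next
  case False
  have "cmod (ind w \<omega> - ind w \<omega>') \<le> 1" unfolding ind_def by auto
  also have "1 \<le> (1 / \<theta> ^ length w) * \<theta> ^ j" using assms(1) False
    by (simp add: power_decreasing)
  finally show ?thesis .
qed

lemma ind_lipall: "lipall (ind w)"
proof (rule lipallI)
  fix \<theta> :: real assume "\<theta> \<in> {0<..<1}"
  then show "\<exists>L. \<forall>\<omega>\<in>SigmaA N A. \<forall>\<omega>'\<in>SigmaA N A. \<forall>j. agree j \<omega> \<omega>' \<longrightarrow> cmod (ind w \<omega> - ind w \<omega>') \<le> L * \<theta> ^ j"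
    using ind_agree by blast
qed

lemma ind_V: "ind w \<in> Vspace N A"
  unfolding V_iff using ind_lipall by (auto simp: ind_def)

lemma tn_ind: assumes "\<theta> \<in> {0<..<1::real}" shows "thetanorm N A \<theta> (ind w) \<le> 1 + 1 / \<theta> ^ length w"
proof -
  have "supnorm N A (ind w) \<le> 1" by (rule sup_le) (auto simp: ind_def)
  moreover have "lipconst N A \<theta> (ind w) \<le> 1 / \<theta> ^ length w"
    by (rule lip_le) (use assms ind_agree in auto)
  ultimately show ?thesis unfolding thetanorm_def by simp
qed

end


context sft begin
lemma incyl_butlast: "incyl w x \<Longrightarrow> incyl (butlast w) x"
proof -
  assume h: "incyl w x"
  have b: "butlast [0..<n] = [0..<n-1]" for n by (cases n) auto
  have "butlast w = map x (butlast [0..<length w])" using h unfolding incyl_def by (metis map_butlast)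
  then show ?thesis unfolding incyl_def b by simp
qed

definition nonemp :: "nat list \<Rightarrow> bool" where
  "nonemp w \<longleftrightarrow> (\<exists>x\<in>SigmaA N A. incyl w x)"

definition cw :: "nat list \<Rightarrow> ((nat \<Rightarrow> nat) \<Rightarrow> complex) \<Rightarrow> complex" where
  "cw w \<phi> = (if nonemp w then (if w = [] then \<phi> (pick []) else \<phi> (pick w) - \<phi> (pick (butlast w))) else 0)"

definition WL :: "nat \<Rightarrow> nat list set" where
  "WL L = {w. set w \<subseteq> {1..N} \<and> length w \<le> L}"

definition Lev :: "nat \<Rightarrow> nat list set" where
  "Lev L = {w. set w \<subseteq> {1..N} \<and> length w = L}"

lemma finite_WL: "finite (WL L)" unfolding WL_def by (rule finite_lists_length_le) simp
lemma finite_Lev: "finite (Lev L)" unfolding Lev_def by (rule finite_lists_length_eq) simp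
lemma card_Lev: "card (Lev L) = N ^ L" unfolding Lev_def using card_lists_length_eq[of "{1..N}" L] by simp
lemma WL_0: "WL 0 = {[]}" unfolding WL_def by auto
lemma WL_Suc: "WL (Suc L) = WL L \<union> Lev (Suc L)" unfolding WL_def Lev_def by auto
lemma WL_Lev_disj: "WL L \<inter> Lev (Suc L) = {}" unfolding WL_def Lev_def by auto

lemma cw_diff: "cw w (\<lambda>\<omega>. \<phi> \<omega> - \<psi> \<omega>) = cw w \<phi> - cw w \<psi>"
  unfolding cw_def by auto
lemma cw_add: "cw w (\<lambda>\<omega>. \<phi> \<omega> + \<psi> \<omega>) = cw w \<phi> + cw w \<psi>"
  unfolding cw_def by auto
lemma cw_scale: "cw w (\<lambda>\<omega>. c * \<phi> \<omega>) = c * cw w \<phi>"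
  unfolding cw_def by (auto simp: right_diff_distrib)

definition ES :: "nat \<Rightarrow> ((nat \<Rightarrow> nat) \<Rightarrow> complex) \<Rightarrow> (nat \<Rightarrow> nat) \<Rightarrow> complex" where
  "ES L \<phi> = (\<lambda>\<omega>. \<Sum>w\<in>WL L. cw w \<phi> * ind w \<omega>)"

lemma ES_V: "ES L \<phi> \<in> Vspace N A"
  unfolding ES_def by (intro V_sum finite_WL V_scale ind_V)

lemma ES_val: assumes "\<omega> \<in> SigmaA N A" shows "ES L \<phi> \<omega> = \<phi> (pick (map \<omega> [0..<L]))"
proof (induction L)
  case 0
  have "nonemp []" unfolding nonemp_def using assms by (auto simp: incyl_def)
  then show ?case unfolding ES_def WL_0 using assms by (simp add: cw_def ind_def incyl_def)
next
  case (Suc L)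
  define w0 where "w0 = map \<omega> [0..<Suc L]"
  have w0L: "w0 \<in> Lev (Suc L)" unfolding Lev_def w0_def using SigmaA_range[OF assms] by auto
  have "(\<Sum>w\<in>Lev (Suc L). cw w \<phi> * ind w \<omega>) = (\<Sum>w\<in>Lev (Suc L). if w = w0 then cw w0 \<phi> else 0)"
  proof (rule sum.cong[OF refl])
    fix w assume "w \<in> Lev (Suc L)"
    then have "length w = Suc L" unfolding Lev_def by auto
    then have "incyl w \<omega> \<longleftrightarrow> w = w0" unfolding incyl_def w0_def by auto
    then show "cw w \<phi> * ind w \<omega> = (if w = w0 then cw w0 \<phi> else 0)"
      unfolding ind_def using assms by auto
  qed
  also have "\<dots> = cw w0 \<phi>" using w0L finite_Lev by simp
  also have "\<dots> = \<phi> (pick w0) - \<phi> (pick (map \<omega> [0..<L]))"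
  proof -
    have "nonemp w0" unfolding nonemp_def w0_def using assms incyl_self by blast
    moreover have "w0 \<noteq> []" unfolding w0_def by simp
    moreover have "butlast w0 = map \<omega> [0..<L]" unfolding w0_def by simp
    ultimately show ?thesis unfolding cw_def by simp
  qed
  finally have "(\<Sum>w\<in>Lev (Suc L). cw w \<phi> * ind w \<omega>) = \<phi> (pick w0) - \<phi> (pick (map \<omega> [0..<L]))" .
  moreover have "ES (Suc L) \<phi> \<omega> = ES L \<phi> \<omega> + (\<Sum>w\<in>Lev (Suc L). cw w \<phi> * ind w \<omega>)"
    unfolding ES_def WL_Suc by (rule sum.union_disjoint) (use finite_WL finite_Lev WL_Lev_disj in auto)
  ultimately show ?case using Suc w0_def by simp
qed

end

locale sftth = sft + fixes \<theta>0 :: real assumes th0: "\<theta>0 \<in> {0<..<1}" and N1: "N \<ge> 1"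
begin

definition \<theta>1 :: real where "\<theta>1 = \<theta>0 / (2 * real N)"
definition \<rho> :: real where "\<rho> = 1 / (2 * real N)"

lemma th1: "\<theta>1 \<in> {0<..<1}" "\<theta>1 \<le> \<theta>0" "\<theta>1 = \<rho> * \<theta>0" "0 < \<rho>" "\<rho> < 1" "real N * \<rho> = 1/2"
  using th0 N1 unfolding \<theta>1_def \<rho>_def by (auto simp: field_simps)

definition lam :: "nat \<Rightarrow> complex" where
  "lam n = (if set (list_decode n) \<subseteq> {1..N} then complex_of_real (\<rho> ^ length (list_decode n)) else 0)"

definition ff :: "nat \<Rightarrow> ((nat \<Rightarrow> nat) \<Rightarrow> complex) \<Rightarrow> complex" where
  "ff n \<phi> = cw (list_decode n) \<phi> / complex_of_real (\<theta>1 ^ length (list_decode n))"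

definition yy :: "nat \<Rightarrow> (nat \<Rightarrow> nat) \<Rightarrow> complex" where
  "yy n = (\<lambda>\<omega>. complex_of_real (\<theta>0 ^ length (list_decode n)) * ind (list_decode n) \<omega>)"

definition gn :: "nat \<Rightarrow> ((nat \<Rightarrow> nat) \<Rightarrow> complex) \<Rightarrow> (nat \<Rightarrow> nat) \<Rightarrow> complex" where
  "gn n \<phi> = (\<lambda>\<omega>. lam n * ff n \<phi> * yy n \<omega>)"

lemma yy_V: "yy n \<in> Vspace N A" unfolding yy_def by (intro V_scale ind_V)
lemma gn_V: "gn n \<phi> \<in> Vspace N A" unfolding gn_def by (rule V_scale[OF yy_V])

lemma aux_cancel: "(x::complex) \<noteq> 0 \<Longrightarrow> y \<noteq> 0 \<Longrightarrow> x * (c / (x * y)) * (y * i) = c * i"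
  by (simp add: field_simps)

lemma gn_enc: assumes "set w \<subseteq> {1..N}" shows "gn (list_encode w) \<phi> \<omega> = cw w \<phi> * ind w \<omega>"
proof -
  have e: "complex_of_real (\<theta>1 ^ length w) = complex_of_real (\<rho> ^ length w) * complex_of_real (\<theta>0 ^ length w)"
    using th1 by (simp add: power_mult_distrib)
  have "complex_of_real (\<rho> ^ length w) \<noteq> 0" "complex_of_real (\<theta>0 ^ length w) \<noteq> 0" using th1 th0 by auto
  moreover have "gn (list_encode w) \<phi> \<omega> = complex_of_real (\<rho> ^ length w) * (cw w \<phi> / complex_of_real (\<theta>1 ^ length w))
     * (complex_of_real (\<theta>0 ^ length w) * ind w \<omega>)"
    unfolding gn_def lam_def ff_def yy_def using assms by (simp del: of_real_power)
  ultimately show ?thesis unfolding e using aux_cancel by metis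
qed

lemma gn_out: "\<not> set (list_decode n) \<subseteq> {1..N} \<Longrightarrow> gn n \<phi> \<omega> = 0"
  unfolding gn_def lam_def by simp

lemma ff_diff: "ff n (\<lambda>\<omega>. \<phi> \<omega> - \<psi> \<omega>) = ff n \<phi> - ff n \<psi>"
  unfolding ff_def cw_diff by (simp add: diff_divide_distrib)
lemma ff_add: "ff n (\<lambda>\<omega>. \<phi> \<omega> + \<psi> \<omega>) = ff n \<phi> + ff n \<psi>"
  unfolding ff_def cw_add by (simp add: add_divide_distrib)
lemma ff_scale: "ff n (\<lambda>\<omega>. c * \<phi> \<omega>) = c * ff n \<phi>"
  unfolding ff_def cw_scale by simp

lemma ff_bound: assumes "\<phi> \<in> Vspace N A" shows "cmod (ff n \<phi>) \<le> thetanorm N A \<theta>1 \<phi> / \<theta>1"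
proof -
  define w where "w = list_decode n"
  have lip: "lipall \<phi>" using assms V_lipall by blast
  have tn0: "0 \<le> thetanorm N A \<theta>1 \<phi>" using tn_nonneg[OF lip th1(1)] .
  have t1: "0 < \<theta>1" "\<theta>1 < 1" using th1 by auto
  have tdiv: "thetanorm N A \<theta>1 \<phi> \<le> thetanorm N A \<theta>1 \<phi> / \<theta>1"
    using tn0 t1 by (simp add: le_divide_eq mult_left_le)
  show ?thesis
  proof (cases "nonemp w")
    case False
    then show ?thesis unfolding ff_def w_def[symmetric] cw_def using tn0 t1 by simp
  next
    case True
    then obtain x where x: "x \<in> SigmaA N A" "incyl w x" unfolding nonemp_def by blast
    show ?thesis
    proof (cases "w = []")
      case True
      have "pick [] \<in> SigmaA N A" using pick(1)[OF x] True by simp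
      then have "cmod (\<phi> (pick [])) \<le> supnorm N A \<phi>" by (rule sup_ge[OF lip])
      also have "\<dots> \<le> thetanorm N A \<theta>1 \<phi>" unfolding thetanorm_def using lip_nonneg[OF lip th1(1)] by simp
      also note tdiv
      finally have "cmod (\<phi> (pick [])) \<le> thetanorm N A \<theta>1 \<phi> / \<theta>1" .
      moreover have "ff n \<phi> = \<phi> (pick [])" unfolding ff_def w_def[symmetric] cw_def using \<open>nonemp w\<close> True by simp
      ultimately show ?thesis by simp
    next
      case False
      have p1: "pick w \<in> SigmaA N A" "incyl w (pick w)" using pick[OF x] by auto
      have p2: "pick (butlast w) \<in> SigmaA N A" "incyl (butlast w) (pick (butlast w))"
        using pick[OF x(1) incyl_butlast[OF x(2)]] by auto
      have ag: "agree (length w - 1) (pick w) (pick (butlast w))"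
        using incyl_agree[OF incyl_butlast[OF p1(2)] p2(2)] by simp
      define d where "d = cmod (\<phi> (pick w) - \<phi> (pick (butlast w)))"
      define k where "k = \<theta>1 ^ (length w - 1)"
      have k0: "0 < k" unfolding k_def using t1 by simp
      have "d \<le> lipconst N A \<theta>1 \<phi> * k" unfolding d_def k_def
        by (rule lip_ge[OF lip th1(1) p1(1) p2(1) ag])
      then have dk: "d / k \<le> lipconst N A \<theta>1 \<phi>" using k0 by (simp add: pos_divide_le_eq)
      have tw: "\<theta>1 ^ length w = \<theta>1 * k" unfolding k_def using False
        by (cases w) auto
      have "d / \<theta>1 ^ length w = (d / k) / \<theta>1" unfolding tw by simp
      also have "\<dots> \<le> lipconst N A \<theta>1 \<phi> / \<theta>1" using dk t1 by (intro divide_right_mono) auto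
      also have "\<dots> \<le> thetanorm N A \<theta>1 \<phi> / \<theta>1" unfolding thetanorm_def
        using sup_nonneg[OF lip] t1 by (intro divide_right_mono) auto
      finally have fin: "d / \<theta>1 ^ length w \<le> thetanorm N A \<theta>1 \<phi> / \<theta>1" .
      have "ff n \<phi> = (\<phi> (pick w) - \<phi> (pick (butlast w))) / complex_of_real (\<theta>1 ^ length w)"
        unfolding ff_def w_def[symmetric] cw_def using \<open>nonemp w\<close> False by (simp del: of_real_power)
      then have "cmod (ff n \<phi>) = d / \<theta>1 ^ length w" unfolding d_def using t1
        by (simp add: norm_divide del: of_real_power)
      then show ?thesis using fin by simp
    qed
  qed
qed

lemma tn_yy: "thetanorm N A \<theta>0 (yy n) \<le> 2"
proof -
  define m where "m = length (list_decode n)"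
  have "thetanorm N A \<theta>0 (yy n) = \<theta>0 ^ m * thetanorm N A \<theta>0 (ind (list_decode n))"
    unfolding yy_def m_def using tn_scale[OF ind_lipall th0] th0 by (simp add: abs_of_pos norm_power)
  also have "\<dots> \<le> \<theta>0 ^ m * (1 + 1 / \<theta>0 ^ m)"
    using tn_ind[OF th0] th0 unfolding m_def by (intro mult_left_mono) auto
  also have "\<dots> = \<theta>0 ^ m + 1" using th0 by (simp add: field_simps)
  also have "\<dots> \<le> 2" using th0 by (simp add: power_le_one)
  finally show ?thesis .
qed

lemma tn_ES: assumes "\<phi> \<in> Vspace N A"
  shows "thetanorm N A \<theta>0 (\<lambda>\<omega>. \<phi> \<omega> - ES L \<phi> \<omega>) \<le> lipconst N A \<theta>1 \<phi> * \<theta>1 ^ L + 2 * lipconst N A \<theta>1 \<phi> * \<rho> ^ L"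
proof -
  define \<Lambda> where "\<Lambda> = lipconst N A \<theta>1 \<phi>"
  have lip: "lipall \<phi>" using assms V_lipall by blast
  have L0: "0 \<le> \<Lambda>" unfolding \<Lambda>_def by (rule lip_nonneg[OF lip th1(1)])
  have near: "cmod (\<phi> \<omega> - ES L \<phi> \<omega>) \<le> \<Lambda> * \<theta>1 ^ L" if "\<omega> \<in> SigmaA N A" for \<omega>
  proof -
    have pk: "pick (map \<omega> [0..<L]) \<in> SigmaA N A" "incyl (map \<omega> [0..<L]) (pick (map \<omega> [0..<L]))"
      using pick[OF that incyl_self] by auto
    have "agree L \<omega> (pick (map \<omega> [0..<L]))" using incyl_agree[OF incyl_self pk(2)] by simp
    then show ?thesis unfolding ES_val[OF that] \<Lambda>_def by (rule lip_ge[OF lip th1(1) that pk(1)])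
  qed
  have "supnorm N A (\<lambda>\<omega>. \<phi> \<omega> - ES L \<phi> \<omega>) \<le> \<Lambda> * \<theta>1 ^ L"
    by (rule sup_le) (use near L0 th1 in auto)
  moreover have "lipconst N A \<theta>0 (\<lambda>\<omega>. \<phi> \<omega> - ES L \<phi> \<omega>) \<le> 2 * \<Lambda> * \<rho> ^ L"
  proof (rule lip_le)
    fix \<omega> \<omega>' j assume o: "\<omega>\<in>SigmaA N A" "\<omega>'\<in>SigmaA N A" "agree j \<omega> \<omega>'"
    show "cmod (\<phi> \<omega> - ES L \<phi> \<omega> - (\<phi> \<omega>' - ES L \<phi> \<omega>')) \<le> 2 * \<Lambda> * \<rho> ^ L * \<theta>0 ^ j"
    proof (cases "L \<le> j")
      case True
      then have "map \<omega> [0..<L] = map \<omega>' [0..<L]" using agree_map agree_mono o(3) by blast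
      then have "ES L \<phi> \<omega> = ES L \<phi> \<omega>'" by (metis ES_val o(1) o(2))
      then have "cmod (\<phi> \<omega> - ES L \<phi> \<omega> - (\<phi> \<omega>' - ES L \<phi> \<omega>')) = cmod (\<phi> \<omega> - \<phi> \<omega>')" by simp
      also have "\<dots> \<le> \<Lambda> * \<theta>1 ^ j" unfolding \<Lambda>_def by (rule lip_ge[OF lip th1(1) o])
      also have "\<dots> = \<Lambda> * \<rho> ^ j * \<theta>0 ^ j" using th1 by (simp add: power_mult_distrib)
      also have "\<dots> \<le> \<Lambda> * \<rho> ^ L * \<theta>0 ^ j"
        using th1 th0 L0 True by (intro mult_right_mono mult_left_mono power_decreasing) auto
      also have "\<dots> \<le> 2 * \<Lambda> * \<rho> ^ L * \<theta>0 ^ j"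
        using th1 th0 L0 by (intro mult_right_mono) auto
      finally show ?thesis .
    next
      case False
      have "cmod (\<phi> \<omega> - ES L \<phi> \<omega> - (\<phi> \<omega>' - ES L \<phi> \<omega>')) \<le> cmod (\<phi> \<omega> - ES L \<phi> \<omega>) + cmod (\<phi> \<omega>' - ES L \<phi> \<omega>')"
        by (rule norm_triangle_ineq4)
      also have "\<dots> \<le> 2 * (\<Lambda> * \<theta>1 ^ L)" using near[OF o(1)] near[OF o(2)] by simp
      also have "\<dots> = 2 * \<Lambda> * \<rho> ^ L * \<theta>0 ^ L" using th1 by (simp add: power_mult_distrib)
      also have "\<dots> \<le> 2 * \<Lambda> * \<rho> ^ L * \<theta>0 ^ j"
        using th1 th0 L0 False by (intro mult_left_mono power_decreasing) auto
      finally show ?thesis .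
    qed
  qed (use L0 th1 th0 in auto)
  ultimately show ?thesis unfolding thetanorm_def \<Lambda>_def by simp
qed

end


context sftth begin

lemma WL_sum_bound: "(\<Sum>w\<in>WL L. \<rho> ^ length w) \<le> 2 - (1/2) ^ L"
proof (induction L)
  case 0 then show ?case unfolding WL_0 by simp
next
  case (Suc L)
  have "(\<Sum>w\<in>Lev (Suc L). \<rho> ^ length w) = (\<Sum>w\<in>Lev (Suc L). \<rho> ^ Suc L)"
    by (rule sum.cong) (auto simp: Lev_def)
  also have "\<dots> = real N ^ Suc L * \<rho> ^ Suc L" using card_Lev by simp
  also have "\<dots> = (real N * \<rho>) ^ Suc L" by (rule power_mult_distrib[symmetric])
  also have "\<dots> = (1/2) ^ Suc L" by (simp only: th1(6))
  finally have lev: "(\<Sum>w\<in>Lev (Suc L). \<rho> ^ length w) = (1/2) ^ Suc L" .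
  have "(\<Sum>w\<in>WL (Suc L). \<rho> ^ length w) = (\<Sum>w\<in>WL L. \<rho> ^ length w) + (\<Sum>w\<in>Lev (Suc L). \<rho> ^ length w)"
    unfolding WL_Suc by (rule sum.union_disjoint) (use finite_WL finite_Lev WL_Lev_disj in auto)
  then show ?case using Suc lev by simp
qed

lemma lam_sum_le: assumes "finite K" shows "(\<Sum>k\<in>K. cmod (lam k)) \<le> 2"
proof -
  define L where "L = Max (insert 0 (length ` list_decode ` K))"
  have Lge: "length (list_decode k) \<le> L" if "k \<in> K" for k
    unfolding L_def using assms that by (intro Max_ge) auto
  define E where "E = list_encode ` WL L"
  have finE: "finite E" unfolding E_def using finite_WL by simp
  have "(\<Sum>k\<in>K. cmod (lam k)) = (\<Sum>k\<in>K \<inter> E. cmod (lam k))"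
  proof (rule sum.mono_neutral_right[OF assms])
    show "\<forall>k\<in>K - K \<inter> E. cmod (lam k) = 0"
    proof
      fix k assume k: "k \<in> K - K \<inter> E"
      have "\<not> set (list_decode k) \<subseteq> {1..N}"
      proof
        assume "set (list_decode k) \<subseteq> {1..N}"
        then have "list_decode k \<in> WL L" unfolding WL_def using Lge k by auto
        then have "k \<in> E" unfolding E_def by (metis image_eqI list_decode_inverse)
        then show False using k by auto
      qed
      then show "cmod (lam k) = 0" unfolding lam_def by simp
    qed
  qed auto
  also have "\<dots> \<le> (\<Sum>k\<in>E. cmod (lam k))" by (rule sum_mono2[OF finE]) auto
  also have "\<dots> = (\<Sum>w\<in>WL L. cmod (lam (list_encode w)))"
    unfolding E_def by (subst sum.reindex) (auto simp: inj_list_encode)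
  also have "\<dots> = (\<Sum>w\<in>WL L. \<rho> ^ length w)"
    by (rule sum.cong) (use th1 in \<open>auto simp: lam_def WL_def norm_power\<close>)
  also have "\<dots> \<le> 2 - (1/2) ^ L" by (rule WL_sum_bound)
  also have "\<dots> \<le> 2" by simp
  finally show ?thesis .
qed

lemma lam_summable: "summable (\<lambda>n. cmod (lam n))"
  by (rule bounded_imp_summable[where B=2]) (auto intro: lam_sum_le)

definition tl :: "nat \<Rightarrow> real" where "tl M = (\<Sum>i. cmod (lam (i + M)))"

lemma tl_tendsto: "tl \<longlonglongrightarrow> 0"
proof -
  have "tl M = (\<Sum>n. cmod (lam n)) - (\<Sum>i<M. cmod (lam i))" for M
    unfolding tl_def using suminf_split_initial_segment[OF lam_summable, of M] by simp
  then have e: "tl = (\<lambda>M. (\<Sum>n. cmod (lam n)) - (\<Sum>i<M. cmod (lam i)))" by auto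
  have "(\<lambda>M. (\<Sum>n. cmod (lam n)) - (\<Sum>i<M. cmod (lam i))) \<longlonglongrightarrow> (\<Sum>n. cmod (lam n)) - (\<Sum>n. cmod (lam n))"
    by (intro tendsto_diff tendsto_const summable_LIMSEQ[OF lam_summable])
  then show ?thesis unfolding e by simp
qed

lemma tl_nonneg: "0 \<le> tl M"
  unfolding tl_def by (rule suminf_nonneg) (auto intro: summable_ignore_initial_segment[OF lam_summable])

lemma tl_bound: assumes "finite D" "D \<subseteq> {M..}" shows "(\<Sum>n\<in>D. cmod (lam n)) \<le> tl M"
proof -
  have inj: "inj_on (\<lambda>n. n - M) D"
  proof (rule inj_onI)
    fix x y assume "x \<in> D" "y \<in> D" "x - M = y - M"
    moreover have "M \<le> x" "M \<le> y" using assms(2) \<open>x \<in> D\<close> \<open>y \<in> D\<close> by auto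
    ultimately show "x = y" by arith
  qed
  have "(\<Sum>n\<in>D. cmod (lam n)) = (\<Sum>i\<in>(\<lambda>n. n - M) ` D. cmod (lam (i + M)))"
    using sum.reindex[OF inj, of "\<lambda>i. cmod (lam (i + M))"] assms(2) by (auto intro!: sum.cong)
  also have "\<dots> \<le> tl M" unfolding tl_def
    by (rule sum_le_suminf) (use assms(1) summable_ignore_initial_segment[OF lam_summable] in auto)
  finally show ?thesis .
qed

definition SM :: "nat \<Rightarrow> ((nat \<Rightarrow> nat) \<Rightarrow> complex) \<Rightarrow> (nat \<Rightarrow> nat) \<Rightarrow> complex" where
  "SM M \<phi> = (\<lambda>\<omega>. \<Sum>n<M. gn n \<phi> \<omega>)"

lemma SM_V: "SM M \<phi> \<in> Vspace N A" unfolding SM_def by (intro V_sum gn_V) auto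

lemma ES_SM: assumes "\<forall>n<M. length (list_decode n) \<le> L"
  shows "(\<lambda>\<omega>. ES L \<phi> \<omega> - SM M \<phi> \<omega>) = (\<lambda>\<omega>. \<Sum>n\<in>list_encode ` WL L - {..<M}. gn n \<phi> \<omega>)"
proof
  fix \<omega>
  define E where "E = list_encode ` WL L"
  have finE: "finite E" unfolding E_def using finite_WL by simp
  have "ES L \<phi> \<omega> = (\<Sum>w\<in>WL L. gn (list_encode w) \<phi> \<omega>)"
    unfolding ES_def by (rule sum.cong) (auto simp: gn_enc WL_def)
  also have "\<dots> = (\<Sum>n\<in>E. gn n \<phi> \<omega>)"
    unfolding E_def by (subst sum.reindex) (auto simp: inj_list_encode)
  finally have es: "ES L \<phi> \<omega> = (\<Sum>n\<in>E. gn n \<phi> \<omega>)" .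
  have "SM M \<phi> \<omega> = (\<Sum>n\<in>{..<M} \<inter> E. gn n \<phi> \<omega>)"
    unfolding SM_def
  proof (rule sum.mono_neutral_right)
    show "\<forall>n\<in>{..<M} - {..<M} \<inter> E. gn n \<phi> \<omega> = 0"
    proof
      fix n assume n: "n \<in> {..<M} - {..<M} \<inter> E"
      have "\<not> set (list_decode n) \<subseteq> {1..N}"
      proof
        assume "set (list_decode n) \<subseteq> {1..N}"
        then have "list_decode n \<in> WL L" unfolding WL_def using assms n by auto
        then have "n \<in> E" unfolding E_def by (metis image_eqI list_decode_inverse)
        then show False using n by auto
      qed
      then show "gn n \<phi> \<omega> = 0" by (rule gn_out)
    qed
  qed auto
  moreover have "(\<Sum>n\<in>E. gn n \<phi> \<omega>) = (\<Sum>n\<in>E \<inter> {..<M}. gn n \<phi> \<omega>) + (\<Sum>n\<in>E - {..<M}. gn n \<phi> \<omega>)"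
    by (rule sum.Int_Diff[OF finE])
  ultimately show "ES L \<phi> \<omega> - SM M \<phi> \<omega> = (\<Sum>n\<in>list_encode ` WL L - {..<M}. gn n \<phi> \<omega>)"
    using es unfolding E_def by (simp add: Int_commute)
qed

context fixes p :: "((nat \<Rightarrow> nat) \<Rightarrow> complex) \<Rightarrow> real" and K :: real
  assumes sn: "seminorm_V N A p" and pK: "\<And>\<phi>. \<phi> \<in> Vspace N A \<Longrightarrow> p \<phi> \<le> K * thetanorm N A \<theta>0 \<phi>"
  and K0: "0 \<le> K"
begin

lemma p_yy: "p (yy n) \<le> 2 * K"
proof -
  have "p (yy n) \<le> K * thetanorm N A \<theta>0 (yy n)" by (rule pK[OF yy_V])
  also have "\<dots> \<le> K * 2" using tn_yy K0 by (rule mult_left_mono)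
  finally show ?thesis by simp
qed

lemma p_gn: assumes "\<phi> \<in> Vspace N A"
  shows "p (gn n \<phi>) \<le> cmod (lam n) * (2 * K / \<theta>1 * thetanorm N A \<theta>1 \<phi>)"
proof -
  have "p (gn n \<phi>) = cmod (lam n * ff n \<phi>) * p (yy n)"
    unfolding gn_def by (rule sn_scale[OF sn yy_V])
  also have "\<dots> = cmod (lam n) * (cmod (ff n \<phi>) * p (yy n))" by (simp add: norm_mult)
  also have "\<dots> \<le> cmod (lam n) * (thetanorm N A \<theta>1 \<phi> / \<theta>1 * (2 * K))"
    using ff_bound[OF assms] p_yy sn_nonneg[OF sn yy_V] tn_nonneg[OF V_lipall[OF assms] th1(1)] th1
    by (intro mult_left_mono mult_mono) auto
  finally show ?thesis by (simp add: field_simps)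
qed

lemma core: assumes "\<phi> \<in> Vspace N A"
  shows "p (\<lambda>\<omega>. \<phi> \<omega> - SM M \<phi> \<omega>) \<le> 2 * K / \<theta>1 * thetanorm N A \<theta>1 \<phi> * tl M"
proof -
  define Bc where "Bc = 2 * K / \<theta>1 * thetanorm N A \<theta>1 \<phi>"
  have Bc0: "0 \<le> Bc" unfolding Bc_def using K0 th1 tn_nonneg[OF V_lipall[OF assms] th1(1)] by simp
  define \<Lambda> where "\<Lambda> = lipconst N A \<theta>1 \<phi>"
  define L0 where "L0 = Max (insert 0 (length ` list_decode ` {..<M}))"
  have L0ge: "\<forall>n<M. length (list_decode n) \<le> L0" unfolding L0_def by (auto intro!: Max_ge)
  have bnd: "p (\<lambda>\<omega>. \<phi> \<omega> - SM M \<phi> \<omega>) \<le> K * (\<Lambda> * \<theta>1 ^ L + 2 * \<Lambda> * \<rho> ^ L) + tl M * Bc"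
    if L: "L \<ge> L0" for L
  proof -
    have ag: "\<forall>n<M. length (list_decode n) \<le> L" using L0ge L by auto
    define D where "D = list_encode ` WL L - {..<M}"
    have finD: "finite D" unfolding D_def using finite_WL by simp
    have "p (\<lambda>\<omega>. \<phi> \<omega> - SM M \<phi> \<omega>) \<le> p (\<lambda>\<omega>. \<phi> \<omega> - ES L \<phi> \<omega>) + p (\<lambda>\<omega>. ES L \<phi> \<omega> - SM M \<phi> \<omega>)"
      by (rule sn_tri[OF sn assms ES_V SM_V])
    also have "p (\<lambda>\<omega>. ES L \<phi> \<omega> - SM M \<phi> \<omega>) \<le> tl M * Bc"
    proof -
      have "p (\<lambda>\<omega>. ES L \<phi> \<omega> - SM M \<phi> \<omega>) = p (\<lambda>\<omega>. \<Sum>n\<in>D. gn n \<phi> \<omega>)"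
        unfolding ES_SM[OF ag] D_def ..
      also have "\<dots> \<le> (\<Sum>n\<in>D. p (gn n \<phi>))" by (rule sn_sum[OF sn finD gn_V])
      also have "\<dots> \<le> (\<Sum>n\<in>D. cmod (lam n) * Bc)"
        by (rule sum_mono) (use p_gn[OF assms] in \<open>simp add: Bc_def\<close>)
      also have "\<dots> = (\<Sum>n\<in>D. cmod (lam n)) * Bc" by (simp add: sum_distrib_right)
      also have "\<dots> \<le> tl M * Bc"
        by (rule mult_right_mono[OF tl_bound[OF finD] Bc0]) (auto simp: D_def)
      finally show ?thesis .
    qed
    also have "p (\<lambda>\<omega>. \<phi> \<omega> - ES L \<phi> \<omega>) \<le> K * (\<Lambda> * \<theta>1 ^ L + 2 * \<Lambda> * \<rho> ^ L)"
      using pK[OF V_diff[OF assms ES_V]] tn_ES[OF assms, of L] K0 unfolding \<Lambda>_def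
      by (meson mult_left_mono order_trans)
    finally show ?thesis by simp
  qed
  have lim: "(\<lambda>L. K * (\<Lambda> * \<theta>1 ^ L + 2 * \<Lambda> * \<rho> ^ L) + tl M * Bc) \<longlonglongrightarrow> K * (\<Lambda> * 0 + 2 * \<Lambda> * 0) + tl M * Bc"
    using th1 by (intro tendsto_intros LIMSEQ_power_zero) auto
  have "p (\<lambda>\<omega>. \<phi> \<omega> - SM M \<phi> \<omega>) \<le> K * (\<Lambda> * 0 + 2 * \<Lambda> * 0) + tl M * Bc"
    by (rule LIMSEQ_le_const[OF lim]) (use bnd in blast)
  then show ?thesis unfolding Bc_def by (simp add: mult.commute mult.left_commute)
qed

end
end


context sftth begin

context fixes p :: "((nat \<Rightarrow> nat) \<Rightarrow> complex) \<Rightarrow> real" and K :: real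
  assumes sn: "seminorm_V N A p" and pK: "\<And>\<phi>. \<phi> \<in> Vspace N A \<Longrightarrow> p \<phi> \<le> K * thetanorm N A \<theta>0 \<phi>"
  and K0: "0 \<le> K"
begin

definition q :: "((nat \<Rightarrow> nat) \<Rightarrow> complex) \<Rightarrow> real" where
  "q \<phi> = (K + 1) * thetanorm N A \<theta>1 \<phi>"

lemma q_sn: "seminorm_V N A q"
  unfolding seminorm_V_def q_def
proof (intro conjI ballI allI)
  fix \<phi> \<psi> assume "\<phi> \<in> Vspace N A" "\<psi> \<in> Vspace N A"
  then show "(K + 1) * thetanorm N A \<theta>1 (\<lambda>\<omega>. \<phi> \<omega> + \<psi> \<omega>) \<le> (K + 1) * thetanorm N A \<theta>1 \<phi> + (K + 1) * thetanorm N A \<theta>1 \<psi>"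
    using tn_add[OF V_lipall V_lipall th1(1)] K0 by (simp add: distrib_left[symmetric] mult_left_mono)
next
  fix \<phi> c assume "\<phi> \<in> Vspace N A"
  then show "(K + 1) * thetanorm N A \<theta>1 (\<lambda>\<omega>. c * \<phi> \<omega>) = cmod c * ((K + 1) * thetanorm N A \<theta>1 \<phi>)"
    using tn_scale[OF V_lipall th1(1)] by simp
qed

lemma q_cont: "cont_seminorm_V N A q"
  unfolding cont_seminorm_V_def
  by (intro conjI q_sn exI[of _ "{\<theta>1}"] exI[of _ "K + 1"]) (use th1 in \<open>auto simp: q_def\<close>)

lemma p_le_q: assumes "\<phi> \<in> Vspace N A" shows "p \<phi> \<le> q \<phi>"
proof -
  have lip: "lipall \<phi>" using V_lipall[OF assms] .
  have "p \<phi> \<le> K * thetanorm N A \<theta>0 \<phi>" by (rule pK[OF assms])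
  also have "\<dots> \<le> K * thetanorm N A \<theta>1 \<phi>" using tn_mono[OF lip th1(1) th0 th1(2)] K0 by (rule mult_left_mono)
  also have "\<dots> \<le> (K + 1) * thetanorm N A \<theta>1 \<phi>" using tn_nonneg[OF lip th1(1)] by (intro mult_right_mono) auto
  finally show ?thesis unfolding q_def .
qed

definition Cf :: real where "Cf = 1 / (\<theta>1 * (K + 1))"

lemma Cf_pos: "0 < Cf" unfolding Cf_def using th1 K0 by simp

lemma ff_q: assumes "\<phi> \<in> Vspace N A" shows "cmod (ff n \<phi>) \<le> Cf * q \<phi>"
proof -
  have "cmod (ff n \<phi>) \<le> thetanorm N A \<theta>1 \<phi> / \<theta>1" by (rule ff_bound[OF assms])
  also have "\<dots> = Cf * q \<phi>"
  proof -
    have "\<theta>1 \<noteq> 0" "K + 1 \<noteq> 0" using K0 th1(1) by auto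
    then show ?thesis unfolding Cf_def q_def by simp
  qed
  finally show ?thesis .
qed

lemma pC_V: "pCauchy N A r s \<Longrightarrow> s k \<in> Vspace N A" unfolding pCauchy_def by blast

definition FF :: "nat \<Rightarrow> (nat \<Rightarrow> (nat \<Rightarrow> nat) \<Rightarrow> complex) \<Rightarrow> complex" where
  "FF n s = lim (\<lambda>k. ff n (s k))"

lemma ff_conv: assumes s: "pCauchy N A q s" shows "(\<lambda>k. ff n (s k)) \<longlonglongrightarrow> FF n s"
proof -
  have "Cauchy (\<lambda>k. ff n (s k))"
  proof (rule metric_CauchyI)
    fix e :: real assume e: "0 < e"
    then have "e / Cf > 0" using Cf_pos by simp
    then obtain M where M: "\<forall>k\<ge>M. \<forall>l\<ge>M. q (\<lambda>\<omega>. s k \<omega> - s l \<omega>) < e / Cf"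
      using s unfolding pCauchy_def by blast
    show "\<exists>M. \<forall>m\<ge>M. \<forall>n'\<ge>M. dist (ff n (s m)) (ff n (s n')) < e"
    proof (intro exI allI impI)
      fix m n' assume "m \<ge> M" "n' \<ge> M"
      have "dist (ff n (s m)) (ff n (s n')) = cmod (ff n (\<lambda>\<omega>. s m \<omega> - s n' \<omega>))"
        by (simp add: dist_norm ff_diff)
      also have "\<dots> \<le> Cf * q (\<lambda>\<omega>. s m \<omega> - s n' \<omega>)" by (rule ff_q[OF V_diff[OF pC_V[OF s] pC_V[OF s]]])
      also have "\<dots> < Cf * (e / Cf)" using M \<open>m \<ge> M\<close> \<open>n' \<ge> M\<close> Cf_pos by (intro mult_strict_left_mono) auto
      also have "\<dots> = e" using Cf_pos by simp
      finally show "dist (ff n (s m)) (ff n (s n')) < e" .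
    qed
  qed
  then show ?thesis unfolding FF_def by (simp add: Cauchy_convergent_iff convergent_LIMSEQ_iff)
qed

lemma q_conv: assumes s: "pCauchy N A q s" shows "(\<lambda>k. q (s k)) \<longlonglongrightarrow> cnorm q s"
proof -
  have "convergent (\<lambda>k. q (s k))"
    by (rule sn_conv[OF q_sn]) (use s in \<open>auto simp: pCauchy_def\<close>)
  then show ?thesis unfolding cnorm_def by (simp add: convergent_LIMSEQ_iff)
qed

lemma FF_add: assumes "pCauchy N A q s" "pCauchy N A q t"
  shows "FF n (\<lambda>k \<omega>. s k \<omega> + t k \<omega>) = FF n s + FF n t"
  unfolding FF_def[of n "\<lambda>k \<omega>. s k \<omega> + t k \<omega>"] ff_add
  by (rule limI) (intro tendsto_add ff_conv assms)

lemma FF_scale: assumes "pCauchy N A q s"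
  shows "FF n (\<lambda>k \<omega>. c * s k \<omega>) = c * FF n s"
  unfolding FF_def[of n "\<lambda>k \<omega>. c * s k \<omega>"] ff_scale
  by (rule limI) (intro tendsto_mult_left ff_conv assms)

lemma FF_bound: assumes s: "pCauchy N A q s" shows "cmod (FF n s) \<le> Cf * cnorm q s"
proof (rule LIMSEQ_le)
  show "(\<lambda>k. cmod (ff n (s k))) \<longlonglongrightarrow> cmod (FF n s)" by (intro tendsto_norm ff_conv s)
  show "(\<lambda>k. Cf * q (s k)) \<longlonglongrightarrow> Cf * cnorm q s" by (intro tendsto_mult_left q_conv s)
  show "\<exists>N. \<forall>k\<ge>N. cmod (ff n (s k)) \<le> Cf * q (s k)" using ff_q[OF pC_V[OF s]] by blast
qed

lemma yy_pC: "pCauchy N A p (\<lambda>k. yy n)"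
  unfolding pCauchy_def using yy_V sn_zero[OF sn] by simp

lemma yy_cnorm: "cnorm p (\<lambda>k. yy n) \<le> 2 * K"
  unfolding cnorm_def using p_yy[OF sn pK K0] by simp

lemma conv_main: assumes s: "pCauchy N A q s"
  shows "(\<lambda>M. cdist p s (\<lambda>k \<omega>. \<Sum>n<M. lam n * FF n s * yy n \<omega>)) \<longlonglongrightarrow> 0"
proof -
  define T where "T M = (\<lambda>\<omega>. \<Sum>n<M. lam n * FF n s * yy n \<omega>)" for M
  have TV: "T M \<in> Vspace N A" for M unfolding T_def by (intro V_sum V_scale yy_V) auto
  have sV: "s k \<in> Vspace N A" for k by (rule pC_V[OF s])
  define a where "a M k = p (\<lambda>\<omega>. s k \<omega> - T M \<omega>)" for M k
  define D where "D M = lim (a M)" for M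
  have cd: "cdist p s (\<lambda>k \<omega>. \<Sum>n<M. lam n * FF n s * yy n \<omega>) = D M" for M
    unfolding cdist_def D_def a_def T_def ..
  have aconv: "a M \<longlonglongrightarrow> D M" for M
  proof -
    have "convergent (\<lambda>k. p (\<lambda>\<omega>. s k \<omega> - T M \<omega>))"
    proof (rule sn_conv[OF sn])
      show "(\<lambda>\<omega>. s k \<omega> - T M \<omega>) \<in> Vspace N A" for k by (rule V_diff[OF sV TV])
      fix e :: real assume "e > 0"
      then obtain K' where K': "\<forall>k\<ge>K'. \<forall>l\<ge>K'. q (\<lambda>\<omega>. s k \<omega> - s l \<omega>) < e"
        using s unfolding pCauchy_def by blast
      show "\<exists>K. \<forall>k\<ge>K. \<forall>l\<ge>K. p (\<lambda>\<omega>. s k \<omega> - T M \<omega> - (s l \<omega> - T M \<omega>)) < e"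
      proof (intro exI allI impI)
        fix k l assume "k \<ge> K'" "l \<ge> K'"
        have "p (\<lambda>\<omega>. s k \<omega> - T M \<omega> - (s l \<omega> - T M \<omega>)) = p (\<lambda>\<omega>. s k \<omega> - s l \<omega>)" by simp
        also have "\<dots> \<le> q (\<lambda>\<omega>. s k \<omega> - s l \<omega>)" by (rule p_le_q[OF V_diff[OF sV sV]])
        also have "\<dots> < e" using K' \<open>k \<ge> K'\<close> \<open>l \<ge> K'\<close> by blast
        finally show "p (\<lambda>\<omega>. s k \<omega> - T M \<omega> - (s l \<omega> - T M \<omega>)) < e" .
      qed
    qed
    then show ?thesis unfolding D_def a_def by (simp add: convergent_LIMSEQ_iff)
  qed
  have D0: "0 \<le> D M" for M
    by (rule LIMSEQ_le_const[OF aconv]) (auto simp: a_def intro!: sn_nonneg[OF sn] V_diff sV TV)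
  define c where "c = 2 * K / \<theta>1 * (cnorm q s / (K + 1))"
  have Dle: "D M \<le> c * tl M" for M
  proof -
    define e where "e k = (\<Sum>n<M. cmod (lam n * (ff n (s k) - FF n s)) * p (yy n))" for k
    have bnd: "a M k \<le> 2 * K / \<theta>1 * (q (s k) / (K + 1)) * tl M + e k" for k
    proof -
      have t1: "a M k \<le> p (\<lambda>\<omega>. s k \<omega> - SM M (s k) \<omega>) + p (\<lambda>\<omega>. SM M (s k) \<omega> - T M \<omega>)"
        unfolding a_def by (rule sn_tri[OF sn sV SM_V TV])
      have t2: "p (\<lambda>\<omega>. s k \<omega> - SM M (s k) \<omega>) \<le> 2 * K / \<theta>1 * thetanorm N A \<theta>1 (s k) * tl M"
        by (rule core[OF sn pK K0 sV])
      have t3: "thetanorm N A \<theta>1 (s k) = q (s k) / (K + 1)" unfolding q_def using K0 by simp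
      have t4: "p (\<lambda>\<omega>. SM M (s k) \<omega> - T M \<omega>) \<le> e k"
      proof -
        have fe: "(\<lambda>\<omega>. SM M (s k) \<omega> - T M \<omega>) = (\<lambda>\<omega>. \<Sum>n<M. (lam n * (ff n (s k) - FF n s)) * yy n \<omega>)"
        proof
          fix \<omega>
          have "SM M (s k) \<omega> - T M \<omega> = (\<Sum>n<M. gn n (s k) \<omega> - lam n * FF n s * yy n \<omega>)"
            unfolding SM_def T_def by (rule sum_subtractf[symmetric])
          also have "\<dots> = (\<Sum>n<M. (lam n * (ff n (s k) - FF n s)) * yy n \<omega>)"
            by (rule sum.cong) (simp_all add: gn_def right_diff_distrib left_diff_distrib)
          finally show "SM M (s k) \<omega> - T M \<omega> = (\<Sum>n<M. (lam n * (ff n (s k) - FF n s)) * yy n \<omega>)" .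
        qed
        have "p (\<lambda>\<omega>. SM M (s k) \<omega> - T M \<omega>) = p (\<lambda>\<omega>. \<Sum>n<M. (lam n * (ff n (s k) - FF n s)) * yy n \<omega>)"
          by (simp only: fe)
        also have "\<dots> \<le> (\<Sum>n<M. p (\<lambda>\<omega>. (lam n * (ff n (s k) - FF n s)) * yy n \<omega>))"
          by (rule sn_sum[OF sn, of "{..<M}" "\<lambda>n \<omega>. (lam n * (ff n (s k) - FF n s)) * yy n \<omega>", OF finite_lessThan V_scale[OF yy_V]])
        also have "\<dots> = e k" unfolding e_def by (rule sum.cong[OF refl]) (rule sn_scale[OF sn yy_V])
        finally show ?thesis .
      qed
      show ?thesis using t1 t2[unfolded t3] t4 by linarith
    qed
    have elim: "e \<longlonglongrightarrow> (\<Sum>n<M. cmod (lam n * 0) * p (yy n))"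
      unfolding e_def
      by (intro tendsto_sum tendsto_mult_right tendsto_norm tendsto_mult_left LIM_zero ff_conv s)
    have e0: "(\<Sum>n<M. cmod (lam n * 0) * p (yy n)) = 0" by simp
    have blim: "(\<lambda>k. 2 * K / \<theta>1 * (q (s k) / (K + 1)) * tl M + e k) \<longlonglongrightarrow> c * tl M + 0"
      unfolding c_def
      using K0 by (intro tendsto_add tendsto_mult_right tendsto_mult_left tendsto_divide tendsto_const q_conv s elim[unfolded e0]) auto
    have "D M \<le> c * tl M + 0" by (rule LIMSEQ_le[OF aconv blim]) (use bnd in blast)
    then show ?thesis by simp
  qed
  have "c * tl M \<ge> 0" for M using D0 Dle order_trans by blast
  have "D \<longlonglongrightarrow> 0"
  proof (rule tendsto_sandwich[of "\<lambda>M. 0" D sequentially "\<lambda>M. c * tl M"])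
    show "\<forall>\<^sub>F n in sequentially. 0 \<le> D n" using D0 by simp
    show "\<forall>\<^sub>F n in sequentially. D n \<le> c * tl n" using Dle by simp
    show "(\<lambda>M. c * tl M) \<longlonglongrightarrow> 0" using tendsto_mult_left[OF tl_tendsto, of c] by simp
  qed simp
  then show ?thesis unfolding cd .
qed

lemma nuclear: "nuclear_natmap N A q p"
  unfolding nuclear_natmap_def
proof (rule exI[of _ lam], rule exI[of _ FF], rule exI[of _ "\<lambda>n k. yy n"], intro conjI allI impI)
  show "summable (\<lambda>n. cmod (lam n))" by (rule lam_summable)
  show "FF n (\<lambda>k \<omega>. s k \<omega> + t k \<omega>) = FF n s + FF n t" if "pCauchy N A q s" "pCauchy N A q t" for n s t
    using FF_add that by blast
  show "FF n (\<lambda>k \<omega>. c * s k \<omega>) = c * FF n s" if "pCauchy N A q s" for n s c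
    using FF_scale that by blast
  show "\<exists>C. \<forall>n s. pCauchy N A q s \<longrightarrow> cmod (FF n s) \<le> C * cnorm q s"
    using FF_bound by blast
  show "pCauchy N A p ((\<lambda>n k. yy n) n)" for n using yy_pC by simp
  show "\<exists>C. \<forall>n. cnorm p ((\<lambda>n k. yy n) n) \<le> C" using yy_cnorm by auto
  show "(\<lambda>M. cdist p s (\<lambda>k \<omega>. \<Sum>n<M. lam n * FF n s * (\<lambda>n k. yy n) n k \<omega>)) \<longlonglongrightarrow> 0"
    if "pCauchy N A q s" for s using conv_main[OF that] by simp
qed

end
end



theorem theoremB1:
  fixes N :: nat and A :: "nat \<Rightarrow> nat \<Rightarrow> nat"
  assumes "N \<ge> 2" and "aperiodic01 N A"
  shows "nuclear_V N A"
proof -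
  interpret sft N A .
  show ?thesis unfolding nuclear_V_def
  proof (intro conjI ballI impI allI)
    fix \<phi> assume phV: "\<phi> \<in> Vspace N A" and ex: "\<exists>\<omega>. \<phi> \<omega> \<noteq> 0"
    then obtain \<omega> where o: "\<phi> \<omega> \<noteq> 0" by blast
    have oS: "\<omega> \<in> SigmaA N A" using phV o unfolding Vspace_def by blast
    have lip: "lipall \<phi>" using V_lipall[OF phV] .
    have th: "(1/2::real) \<in> {0<..<1}" by simp
    have "0 < cmod (\<phi> \<omega>)" using o by simp
    also have "\<dots> \<le> supnorm N A \<phi>" by (rule sup_ge[OF lip oS])
    finally have "0 < thetanorm N A (1/2) \<phi>" unfolding thetanorm_def using lip_nonneg[OF lip th] by simp
    then show "\<exists>\<theta>\<in>{0<..<1}. 0 < thetanorm N A \<theta> \<phi>" using th by blast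
  next
    fix p assume pc: "cont_seminorm_V N A p"
    then have sn: "seminorm_V N A p" unfolding cont_seminorm_V_def by blast
    from pc obtain F C where F: "finite F" "F \<subseteq> {0<..<1}"
      and pF: "\<And>\<phi>. \<phi> \<in> Vspace N A \<Longrightarrow> p \<phi> \<le> C * (\<Sum>\<theta>\<in>F. thetanorm N A \<theta> \<phi>)"
      unfolding cont_seminorm_V_def by blast
    define \<theta>0 where "\<theta>0 = Min (insert (1/2) F)"
    have th0: "\<theta>0 \<in> {0<..<1}"
    proof -
      have "\<theta>0 \<in> insert (1/2) F" unfolding \<theta>0_def using F(1) by (intro Min_in) auto
      then show ?thesis using F(2) by auto
    qed
    have th0le: "\<theta>0 \<le> \<theta>" if "\<theta> \<in> F" for \<theta> unfolding \<theta>0_def using F(1) that by (intro Min_le) auto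
    define K where "K = max C 0 * real (card F)"
    have K0: "0 \<le> K" unfolding K_def by simp
    have pK: "p \<phi> \<le> K * thetanorm N A \<theta>0 \<phi>" if phV: "\<phi> \<in> Vspace N A" for \<phi>
    proof -
      have lip: "lipall \<phi>" using V_lipall[OF phV] .
      have s0: "0 \<le> (\<Sum>\<theta>\<in>F. thetanorm N A \<theta> \<phi>)"
        using F(2) tn_nonneg[OF lip] by (intro sum_nonneg) auto
      have "(\<Sum>\<theta>\<in>F. thetanorm N A \<theta> \<phi>) \<le> (\<Sum>\<theta>\<in>F. thetanorm N A \<theta>0 \<phi>)"
        using F(2) th0le by (intro sum_mono tn_mono[OF lip th0]) auto
      also have "\<dots> = real (card F) * thetanorm N A \<theta>0 \<phi>" by simp
      finally have s1: "(\<Sum>\<theta>\<in>F. thetanorm N A \<theta> \<phi>) \<le> real (card F) * thetanorm N A \<theta>0 \<phi>" .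
      have "p \<phi> \<le> C * (\<Sum>\<theta>\<in>F. thetanorm N A \<theta> \<phi>)" by (rule pF[OF phV])
      also have "\<dots> \<le> max C 0 * (\<Sum>\<theta>\<in>F. thetanorm N A \<theta> \<phi>)" using s0 by (intro mult_right_mono) auto
      also have "\<dots> \<le> max C 0 * (real (card F) * thetanorm N A \<theta>0 \<phi>)" using s1 by (intro mult_left_mono) auto
      finally show ?thesis unfolding K_def by (simp add: mult.assoc)
    qed
    interpret sftth N A \<theta>0 by unfold_locales (use th0 assms(1) in auto)
    show "\<exists>q. cont_seminorm_V N A q \<and> (\<forall>\<phi>\<in>Vspace N A. p \<phi> \<le> q \<phi>) \<and> nuclear_natmap N A q p"
      using q_cont[OF sn pK K0] p_le_q[OF sn pK K0] nuclear[OF sn pK K0] by blast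
  qed
qed


end
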